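(* For every word $C$ over the alphabet $\Sigma_D$ there exists a word $C'$ over $\Sigma_D$ in which the total number of occurrences of the symbols $CCX_{0,1}$, $CCX_{0,2}$, $CCX_{1,2}$ (the Toffoli count of $C'$) is at most $120$, and such that $[\![C]\!] = [\![C']\!]$.
   Context: Qubits are labelled $0,1,2$. The computational basis vector $|x_0x_1x_2\rangle$ ($x_i\in\{0,1\}$) is identified with the standard basis vector $e_{4x_0+2x_1+x_2}$ of $\mathbb{R}^8$, so a $2\times 2$ matrix $M$ acting on qubit $0$, $1$, $2$ is $M\otimes I\otimes I$, $I\otimes M\otimes I$, $I\otimes I\otimes M$ respectively, written $M_j$. Let $X=\begin{bmatrix}0&1\\1&0\end{bmatrix}$, $Z=\begin{bmatrix}1&0\\0&-1\end{bmatrix}$, $H=\frac{1}{\sqrt2}\begin{bmatrix}1&1\\1&-1\end{bmatrix}$. For $j\neq k$, $CX_{j,k}$ (resp. $CZ_{j,k}$) is the $8\times 8$ matrix sending $|x_0x_1x_2\rangle$ to $(X_k)^{x_j}|x_0x_1x_2\rangle$ (resp. $(Z_k)^{x_j}|x_0x_1x_2\rangle$). For $j<k$, $CCX_{j,k}$ sends $|x_0x_1x_2\rangle$ to $(X_l)^{x_jx_k}|x_0x_1x_2\rangle$ where $l$ is the element of $\{0,1,2\}\setminus\{j,k\}$. $K_{j,k}=H_jH_k$, and $\sigma_{j,k}$ is the permutation matrix swapping qubits $j$ and $k$. The alphabet $\Sigma_D$ consists of the $23$ symbols $X_0,X_1,X_2$; $CX_{k,l}$ for all $k\neq l$ in $\{0,1,2\}$;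 $CCX_{0,1},CCX_{0,2},CCX_{1,2}$; $Z_0,Z_1,Z_2$; $CZ_{0,1},CZ_{0,2},CZ_{1,2}$; $K_{0,1},K_{1,2}$; $\sigma_{0,1},\sigma_{0,2},\sigma_{1,2}$, each interpreted as the corresponding $8\times 8$ matrix. A word $w_1w_2\cdots w_m$ over $\Sigma_D$ is interpreted as the matrix product $[\![w_1w_2\cdots w_m]\!]=[\![w_1]\!][\![w_2]\!]\cdots[\![w_m]\!]$ (the empty word gives the identity). *)

theory Defs
  imports "Jordan_Normal_Form.Matrix"
begin

text \<open>Basis index x in {0..<8} encodes |x0 x1 x2> with x = 4 x0 + 2 x1 + x2.
  Matrices are 8 x 8 real matrices (Jordan_Normal_Form mat).\<close>

definition qbit :: "nat \<Rightarrow> nat \<Rightarrow> nat" where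
  "qbit x j = (x div 2 ^ (2 - j)) mod 2"

definition qflip :: "nat \<Rightarrow> nat \<Rightarrow> nat" where
  "qflip x j = (if qbit x j = 1 then x - 2 ^ (2 - j) else x + 2 ^ (2 - j))"

definition perm_mat :: "(nat \<Rightarrow> nat) \<Rightarrow> real mat" where
  "perm_mat f = mat 8 8 (\<lambda>(i, x). if i = f x then 1 else 0)"

definition diag_sign :: "(nat \<Rightarrow> bool) \<Rightarrow> real mat" where
  "diag_sign P = mat 8 8 (\<lambda>(i, x). if i = x then (if P x then -1 else 1) else 0)"

definition X_mat :: "nat \<Rightarrow> real mat" where
  "X_mat j = perm_mat (\<lambda>x. qflip x j)"

definition Z_mat :: "nat \<Rightarrow> real mat" where
  "Z_mat j = diag_sign (\<lambda>x. qbit x j = 1)"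

definition CX_mat :: "nat \<Rightarrow> nat \<Rightarrow> real mat" where
  "CX_mat j k = perm_mat (\<lambda>x. if qbit x j = 1 then qflip x k else x)"

definition CZ_mat :: "nat \<Rightarrow> nat \<Rightarrow> real mat" where
  "CZ_mat j k = diag_sign (\<lambda>x. qbit x j = 1 \<and> qbit x k = 1)"

definition CCX_mat :: "nat \<Rightarrow> nat \<Rightarrow> real mat" where
  "CCX_mat j k = perm_mat (\<lambda>x. if qbit x j = 1 \<and> qbit x k = 1 then qflip x (3 - j - k) else x)"

text \<open>Hadamard on qubit j: H tensored with identities.\<close>
definition H_mat :: "nat \<Rightarrow> real mat" where
  "H_mat j = mat 8 8 (\<lambda>(i, x).
     if (\<forall>m<3. m \<noteq> j \<longrightarrow> qbit i m = qbit x m)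
     then (if qbit i j = 1 \<and> qbit x j = 1 then - 1 / sqrt 2 else 1 / sqrt 2)
     else 0)"

definition K_mat :: "nat \<Rightarrow> nat \<Rightarrow> real mat" where
  "K_mat j k = H_mat j * H_mat k"

definition swap_mat :: "nat \<Rightarrow> nat \<Rightarrow> real mat" where
  "swap_mat j k = perm_mat (\<lambda>x. if qbit x j = qbit x k then x else qflip (qflip x j) k)"

datatype gate = Xg nat | CXg nat nat | CCXg nat nat | Zg nat | CZg nat nat
  | Kg nat nat | Sg nat nat

definition Sigma_D :: "gate set" where
  "Sigma_D = {Xg 0, Xg 1, Xg 2,
     CXg 0 1, CXg 0 2, CXg 1 0, CXg 1 2, CXg 2 0, CXg 2 1,
     CCXg 0 1, CCXg 0 2, CCXg 1 2,
     Zg 0, Zg 1, Zg 2,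
     CZg 0 1, CZg 0 2, CZg 1 2,
     Kg 0 1, Kg 1 2,
     Sg 0 1, Sg 0 2, Sg 1 2}"

fun gate_sem :: "gate \<Rightarrow> real mat" where
  "gate_sem (Xg j) = X_mat j"
| "gate_sem (CXg j k) = CX_mat j k"
| "gate_sem (CCXg j k) = CCX_mat j k"
| "gate_sem (Zg j) = Z_mat j"
| "gate_sem (CZg j k) = CZ_mat j k"
| "gate_sem (Kg j k) = K_mat j k"
| "gate_sem (Sg j k) = swap_mat j k"

definition word_sem :: "gate list \<Rightarrow> real mat" where
  "word_sem w = foldr (\<lambda>g M. gate_sem g * M) w (1\<^sub>m 8)"

fun is_toffoli :: "gate \<Rightarrow> bool" where
  "is_toffoli (CCXg _ _) = True"
| "is_toffoli _ = False"

definition toffoli_count :: "gate list \<Rightarrow> nat" where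
  "toffoli_count w = length (filter is_toffoli w)"

end

theory Submission
  imports Defs
begin


definition half8 :: "int list \<Rightarrow> int list option" where
  "half8 xs = (if list_all even xs then Some (map (\<lambda>x. x div 2) xs) else None)"

datatype g = X0 | X1 | X2 | Z0 | Z1 | Z2 | CX01 | CX02 | CX10 | CX12 | CX20 | CX21 | CCX01 | CCX02 | CCX12 | CZ01 | CZ02 | CZ12 | K01 | K12 | S01 | S02 | S12

fun gs :: "g \<Rightarrow> gate" where
"gs X0 = Xg 0"
| "gs X1 = Xg 1"
| "gs X2 = Xg 2"
| "gs Z0 = Zg 0"
| "gs Z1 = Zg 1"
| "gs Z2 = Zg 2"
| "gs CX01 = CXg 0 1"
| "gs CX02 = CXg 0 2"
| "gs CX10 = CXg 1 0"
| "gs CX12 = CXg 1 2"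
| "gs CX20 = CXg 2 0"
| "gs CX21 = CXg 2 1"
| "gs CCX01 = CCXg 0 1"
| "gs CCX02 = CCXg 0 2"
| "gs CCX12 = CCXg 1 2"
| "gs CZ01 = CZg 0 1"
| "gs CZ02 = CZg 0 2"
| "gs CZ12 = CZg 1 2"
| "gs K01 = Kg 0 1"
| "gs K12 = Kg 1 2"
| "gs S01 = Sg 0 1"
| "gs S02 = Sg 0 2"
| "gs S12 = Sg 1 2"

fun iat :: "g \<Rightarrow> int \<Rightarrow> int \<Rightarrow> int \<Rightarrow> int \<Rightarrow> int \<Rightarrow> int \<Rightarrow> int \<Rightarrow> int \<Rightarrow> int list option" where
"iat X0 a0 a1 a2 a3 a4 a5 a6 a7 = Some [a4, a5, a6, a7, a0, a1, a2, a3]"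
| "iat X1 a0 a1 a2 a3 a4 a5 a6 a7 = Some [a2, a3, a0, a1, a6, a7, a4, a5]"
| "iat X2 a0 a1 a2 a3 a4 a5 a6 a7 = Some [a1, a0, a3, a2, a5, a4, a7, a6]"
| "iat Z0 a0 a1 a2 a3 a4 a5 a6 a7 = Some [a0, a1, a2, a3, - a4, - a5, - a6, - a7]"
| "iat Z1 a0 a1 a2 a3 a4 a5 a6 a7 = Some [a0, a1, - a2, - a3, a4, a5, - a6, - a7]"
| "iat Z2 a0 a1 a2 a3 a4 a5 a6 a7 = Some [a0, - a1, a2, - a3, a4, - a5, a6, - a7]"
| "iat CX01 a0 a1 a2 a3 a4 a5 a6 a7 = Some [a0, a1, a2, a3, a6, a7, a4, a5]"
| "iat CX02 a0 a1 a2 a3 a4 a5 a6 a7 = Some [a0, a1, a2, a3, a5, a4, a7, a6]"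
| "iat CX10 a0 a1 a2 a3 a4 a5 a6 a7 = Some [a0, a1, a6, a7, a4, a5, a2, a3]"
| "iat CX12 a0 a1 a2 a3 a4 a5 a6 a7 = Some [a0, a1, a3, a2, a4, a5, a7, a6]"
| "iat CX20 a0 a1 a2 a3 a4 a5 a6 a7 = Some [a0, a5, a2, a7, a4, a1, a6, a3]"
| "iat CX21 a0 a1 a2 a3 a4 a5 a6 a7 = Some [a0, a3, a2, a1, a4, a7, a6, a5]"
| "iat CCX01 a0 a1 a2 a3 a4 a5 a6 a7 = Some [a0, a1, a2, a3, a4, a5, a7, a6]"
| "iat CCX02 a0 a1 a2 a3 a4 a5 a6 a7 = Some [a0, a1, a2, a3, a4, a7, a6, a5]"
| "iat CCX12 a0 a1 a2 a3 a4 a5 a6 a7 = Some [a0, a1, a2, a7, a4, a5, a6, a3]"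
| "iat CZ01 a0 a1 a2 a3 a4 a5 a6 a7 = Some [a0, a1, a2, a3, a4, a5, - a6, - a7]"
| "iat CZ02 a0 a1 a2 a3 a4 a5 a6 a7 = Some [a0, a1, a2, a3, a4, - a5, a6, - a7]"
| "iat CZ12 a0 a1 a2 a3 a4 a5 a6 a7 = Some [a0, a1, a2, - a3, a4, a5, a6, - a7]"
| "iat K01 a0 a1 a2 a3 a4 a5 a6 a7 = half8 [a0 +a2 +a4 +a6, a1 +a3 +a5 +a7, a0 -a2 +a4 -a6, a1 -a3 +a5 -a7, a0 +a2 -a4 -a6, a1 +a3 -a5 -a7, a0 -a2 -a4 +a6, a1 -a3 -a5 +a7]"
| "iat K12 a0 a1 a2 a3 a4 a5 a6 a7 = half8 [a0 +a1 +a2 +a3, a0 -a1 +a2 -a3, a0 +a1 -a2 -a3, a0 -a1 -a2 +a3, a4 +a5 +a6 +a7, a4 -a5 +a6 -a7, a4 +a5 -a6 -a7, a4 -a5 -a6 +a7]"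
| "iat S01 a0 a1 a2 a3 a4 a5 a6 a7 = Some [a0, a1, a4, a5, a2, a3, a6, a7]"
| "iat S02 a0 a1 a2 a3 a4 a5 a6 a7 = Some [a0, a4, a2, a6, a1, a5, a3, a7]"
| "iat S12 a0 a1 a2 a3 a4 a5 a6 a7 = Some [a0, a2, a1, a3, a4, a6, a5, a7]"

fun ia :: "g \<Rightarrow> int list \<Rightarrow> int list option" where
  "ia c [a0,a1,a2,a3,a4,a5,a6,a7] = iat c a0 a1 a2 a3 a4 a5 a6 a7"
| "ia c _ = None"



definition rv :: "int list \<Rightarrow> real vec" where
  "rv xs = vec 8 (\<lambda>i. of_int (xs ! i) / 4)"

lemma less8: "(i::nat) < 8 \<Longrightarrow> i = 0 \<or> i = 1 \<or> i = 2 \<or> i = 3 \<or> i = 4 \<or> i = 5 \<or> i = 6 \<or> i = 7"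
  by auto

lemma sum8: "(\<Sum>x<8. (f::nat\<Rightarrow>real) x) = f 0 + f 1 + f 2 + f 3 + f 4 + f 5 + f 6 + f 7"
  by (simp add: eval_nat_numeral)

lemma mv: "mat 8 8 F *\<^sub>v rv xs = vec 8 (\<lambda>i. \<Sum>x<8. F (i,x) * (of_int (xs!x)/4))"
  by (rule eq_vecI) (auto simp: rv_def scalar_prod_def atLeast0LessThan)

lemma vec8_eq: "(\<And>i. i < 8 \<Longrightarrow> f i = g i) \<Longrightarrow> vec 8 f = vec (8::nat) g"
  by auto

lemma X0_ok: "gate_sem (gs X0) *\<^sub>v rv [a0,a1,a2,a3,a4,a5,a6,a7] = rv [a4, a5, a6, a7, a0, a1, a2, a3]"
  unfolding gs.simps gate_sem.simps X_mat_def perm_mat_def mv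
  unfolding rv_def
  apply (rule vec8_eq)
  apply (drule less8)
  apply (elim disjE; simp add: sum8 qflip_def qbit_def)
  done


lemma mat_mult8: "mat 8 8 A * mat 8 8 B = mat 8 8 (\<lambda>(i,x). \<Sum>y<8. A (i,y) * B (y,x))"
  by (rule eq_matI) (auto simp: scalar_prod_def atLeast0LessThan row_def col_def)


lemma all3: "(\<forall>m<3. m \<noteq> j \<longrightarrow> P m) \<longleftrightarrow> ((0::nat) \<noteq> j \<longrightarrow> P 0) \<and> (1 \<noteq> j \<longrightarrow> P 1) \<and> (2 \<noteq> j \<longrightarrow> P 2)"
  by (auto simp: less_Suc_eq numeral_eq_Suc)

lemma sum8v: "(\<Sum>x<8. (f::nat\<Rightarrow>real) x) = f 0 + f 1 + f 2 + f 3 + f 4 + f 5 + f 6 + f 7"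
  by (simp add: eval_nat_numeral)

lemma qbit0[simp]: "qbit x 0 = x div 4 mod 2" by (simp add: qbit_def)
lemma qbit1[simp]: "qbit x 1 = x div 2 mod 2" by (simp add: qbit_def)
lemma qbit2[simp]: "qbit x 2 = x mod 2" by (simp add: qbit_def)
lemma qflip0[simp]: "qflip x 0 = (if x div 4 mod 2 = 1 then x - 4 else x + 4)" by (simp add: qflip_def)
lemma qflip1[simp]: "qflip x 1 = (if x div 2 mod 2 = 1 then x - 2 else x + 2)" by (simp add: qflip_def qbit_def)
lemma qbit1'[simp]: "qbit x (Suc 0) = x div 2 mod 2" by (simp add: qbit_def)
lemma qflip1'[simp]: "qflip x (Suc 0) = (if x div 2 mod 2 = 1 then x - 2 else x + 2)" by (simp add: qflip_def qbit_def)
lemma qflip2[simp]: "qflip x 2 = (if x mod 2 = 1 then x - 1 else x + 1)" by (simp add: qflip_def)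

lemma H_ent: "i < 8 \<Longrightarrow> dim_vec v = 8 \<Longrightarrow>
  (H_mat j *\<^sub>v v) $ i = (\<Sum>x<8. (if (\<forall>m<3. m \<noteq> j \<longrightarrow> qbit i m = qbit x m)
     then (if qbit i j = 1 \<and> qbit x j = 1 then - 1 / sqrt 2 else 1 / sqrt 2)
     else 0) * v $ x)"
  unfolding H_mat_def by (simp add: scalar_prod_def atLeast0LessThan row_def mult.commute)

lemma H_act: "j < 3 \<Longrightarrow> i < 8 \<Longrightarrow> dim_vec v = 8 \<Longrightarrow>
  (H_mat j *\<^sub>v v) $ i = (1 / sqrt 2) * (if qbit i j = 0 then v $ i + v $ (qflip i j) else v $ (qflip i j) - v $ i)"
  apply (simp only: H_ent sum8v all3)
  apply (drule less8)
  apply (subgoal_tac "j = 0 \<or> j = 1 \<or> j = 2")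
   prefer 2 apply arith
  apply (elim disjE)
  apply (simp_all del: One_nat_def add: add_divide_distrib diff_divide_distrib)
  apply (simp_all add: eval_nat_numeral)
  done


lemma H_carrier: "H_mat j \<in> carrier_mat 8 8" unfolding H_mat_def by (rule mat_carrier)
lemma H_dim[simp]: "dim_row (H_mat j) = 8" "dim_col (H_mat j) = 8"
  using H_carrier by auto
lemma rv_dim[simp]: "dim_vec (rv xs) = 8" by (simp add: rv_def)
lemma rv_carrier: "rv xs \<in> carrier_vec 8" unfolding rv_def by (rule vec_carrier)

definition hv :: "nat \<Rightarrow> real vec \<Rightarrow> nat \<Rightarrow> real" where
  "hv k v x = (if qbit x k = 0 then v $ x + v $ (qflip x k) else v $ (qflip x k) - v $ x)"

lemma qflip_lt: "j < 3 \<Longrightarrow> i < 8 \<Longrightarrow> qflip i j < 8"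
  apply (drule less8)
  apply (subgoal_tac "j = 0 \<or> j = 1 \<or> j = 2")
   prefer 2 apply arith
  by (elim disjE; simp)

lemma cc: "1 / sqrt 2 * (1 / sqrt 2) = (1/2::real)"
  by (simp add: field_simps)

lemma K_act: "j < 3 \<Longrightarrow> k < 3 \<Longrightarrow> i < 8 \<Longrightarrow> (K_mat j k *\<^sub>v v) $ i =
   1/2 * (if qbit i j = 0 then hv k v i + hv k v (qflip i j) else hv k v (qflip i j) - hv k v i)" if "dim_vec v = 8"
proof -
  assume a: "j < 3" "k < 3" "i < 8"
  have vc: "v \<in> carrier_vec 8" using that by (rule carrier_vecI)
  have h: "(H_mat k *\<^sub>v v) $ x = 1 / sqrt 2 * hv k v x" if "x < 8" for x
    unfolding hv_def by (rule H_act[OF a(2) that \<open>dim_vec v = 8\<close>])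
  have "(K_mat j k *\<^sub>v v) $ i = (H_mat j *\<^sub>v (H_mat k *\<^sub>v v)) $ i"
    unfolding K_mat_def by (subst assoc_mult_mat_vec[OF H_carrier H_carrier vc], rule refl)
  also have "\<dots> = 1 / sqrt 2 * (if qbit i j = 0 then (H_mat k *\<^sub>v v) $ i + (H_mat k *\<^sub>v v) $ (qflip i j)
     else (H_mat k *\<^sub>v v) $ (qflip i j) - (H_mat k *\<^sub>v v) $ i)"
    by (rule H_act, use a in auto)
  also have "\<dots> = 1 / sqrt 2 * (if qbit i j = 0 then 1 / sqrt 2 * hv k v i + 1 / sqrt 2 * hv k v (qflip i j)
     else 1 / sqrt 2 * hv k v (qflip i j) - 1 / sqrt 2 * hv k v i)"
    using a by (simp only: h qflip_lt)
  also have "\<dots> = 1/2 * (if qbit i j = 0 then hv k v i + hv k v (qflip i j) else hv k v (qflip i j) - hv k v i)"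
    by (cases "qbit i j = 0") (simp_all only: if_P if_not_P if_True if_False distrib_left right_diff_distrib mult.assoc[symmetric] cc)
  finally show ?thesis .
qed


lemma half_div: "even (s::int) \<Longrightarrow> real_of_int (s div 2) / 4 = real_of_int s / 8"
  by (auto elim!: evenE)

lemma half8_sound: "half8 [s0,s1,s2,s3,s4,s5,s6,s7] = Some ys \<Longrightarrow>
   rv ys = vec 8 (\<lambda>i. real_of_int ([s0,s1,s2,s3,s4,s5,s6,s7] ! i) / 8)"
proof -
  assume h: "half8 [s0,s1,s2,s3,s4,s5,s6,s7] = Some ys"
  hence ev: "even s0" "even s1" "even s2" "even s3" "even s4" "even s5" "even s6" "even s7"
    and ys: "ys = map (\<lambda>x. x div 2) [s0,s1,s2,s3,s4,s5,s6,s7]"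
    by (auto simp: half8_def split: if_splits)
  show ?thesis unfolding ys rv_def
    apply (rule vec8_eq)
    apply (drule less8)
    using ev apply (auto simp: half_div)
    done
qed

lemma ia_shape: "ia c xs = Some ys \<Longrightarrow> \<exists>a0 a1 a2 a3 a4 a5 a6 a7. xs = [a0,a1,a2,a3,a4,a5,a6,a7]"
  by (cases "(c,xs)" rule: ia.cases) auto

lemma K01_sound: "ia K01 [a0,a1,a2,a3,a4,a5,a6,a7] = Some ys \<Longrightarrow> gate_sem (gs K01) *\<^sub>v rv [a0,a1,a2,a3,a4,a5,a6,a7] = rv ys"
  apply (simp only: ia.simps iat.simps gs.simps gate_sem.simps)
  apply (drule half8_sound, simp only:)
  apply (rule eq_vecI)
   apply (subst K_act, simp, simp, simp, simp, simp)
   apply (subgoal_tac "i < 8")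
    prefer 2 apply simp
   apply (drule less8)
   apply (elim disjE; simp add: hv_def rv_def numeral_2_eq_2[symmetric] field_simps)
  apply (simp add: K_mat_def)
  done
lemma K12_sound: "ia K12 [a0,a1,a2,a3,a4,a5,a6,a7] = Some ys \<Longrightarrow> gate_sem (gs K12) *\<^sub>v rv [a0,a1,a2,a3,a4,a5,a6,a7] = rv ys"
  apply (simp only: ia.simps iat.simps gs.simps gate_sem.simps)
  apply (drule half8_sound, simp only:)
  apply (rule eq_vecI)
   apply (subst K_act, simp, simp, simp, simp, simp)
   apply (subgoal_tac "i < 8")
    prefer 2 apply simp
   apply (drule less8)
   apply (elim disjE; simp add: hv_def rv_def numeral_2_eq_2[symmetric] field_simps)
  apply (simp add: K_mat_def)
  done

lemma ia_sound8: "ia c [a0,a1,a2,a3,a4,a5,a6,a7] = Some ys \<Longrightarrow> gate_sem (gs c) *\<^sub>v rv [a0,a1,a2,a3,a4,a5,a6,a7] = rv ys"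
  apply (cases "c = K01")
   apply (simp only:, erule K01_sound)
  apply (cases "c = K12")
   apply (simp only:, erule K12_sound)
  apply (cases c; simp only: ia.simps iat.simps gs.simps gate_sem.simps X_mat_def Z_mat_def CX_mat_def CZ_mat_def CCX_mat_def
      swap_mat_def perm_mat_def diag_sign_def mv option.inject g.distinct simp_thms;
      (drule sym; simp only:; unfold rv_def; rule vec8_eq; drule less8; elim disjE; simp add: sum8))
  done

lemma ia_sound: "ia c xs = Some ys \<Longrightarrow> gate_sem (gs c) *\<^sub>v rv xs = rv ys"
  using ia_shape ia_sound8 by blast


lemma gate_carrier: "gate_sem (gs c) \<in> carrier_mat 8 8"
  by (cases c; simp only: gs.simps gate_sem.simps X_mat_def Z_mat_def CX_mat_def CZ_mat_def CCX_mat_def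
      swap_mat_def perm_mat_def diag_sign_def K_mat_def; (rule mat_carrier)?; rule mult_carrier_mat[OF H_carrier H_carrier])

lemma word_sem_Cons: "word_sem (g # w) = gate_sem g * word_sem w"
  by (simp add: word_sem_def)

lemma word_sem_Nil: "word_sem [] = 1\<^sub>m 8"
  by (simp add: word_sem_def)

lemma word_carrier: "word_sem (map gs w) \<in> carrier_mat 8 8"
  by (induction w) (simp_all add: word_sem_Cons word_sem_Nil mult_carrier_mat[OF gate_carrier])

lemma word_sem_append: "word_sem (map gs (a @ b)) = word_sem (map gs a) * word_sem (map gs b)"
proof (induction a)
  case Nil
  then show ?case using word_carrier[of b] by (simp add: word_sem_Nil)
next
  case (Cons c a)
  then show ?case
    by (simp add: word_sem_Cons assoc_mult_mat[OF gate_carrier word_carrier word_carrier])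
qed

fun wact :: "g list \<Rightarrow> int list \<Rightarrow> int list option" where
  "wact [] xs = Some xs"
| "wact (c # w) xs = (case wact w xs of None \<Rightarrow> None | Some ys \<Rightarrow> ia c ys)"

lemma wact_sound: "wact w xs = Some ys \<Longrightarrow> word_sem (map gs w) *\<^sub>v rv xs = rv ys"
proof (induction w arbitrary: ys)
  case Nil
  then show ?case using rv_carrier by (simp add: word_sem_Nil)
next
  case (Cons c w)
  then obtain zs where z: "wact w xs = Some zs" and c: "ia c zs = Some ys"
    by (auto split: option.splits)
  have "word_sem (map gs (c # w)) *\<^sub>v rv xs = gate_sem (gs c) *\<^sub>v (word_sem (map gs w) *\<^sub>v rv xs)"
    by (simp add: word_sem_Cons assoc_mult_mat_vec[OF gate_carrier word_carrier rv_carrier])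
  also have "\<dots> = rv ys" using Cons.IH[OF z] ia_sound[OF c] by simp
  finally show ?case .
qed

definition basis8 :: "int list list" where
  "basis8 = [[4,0,0,0,0,0,0,0],[0,4,0,0,0,0,0,0],[0,0,4,0,0,0,0,0],[0,0,0,4,0,0,0,0],
             [0,0,0,0,4,0,0,0],[0,0,0,0,0,4,0,0],[0,0,0,0,0,0,4,0],[0,0,0,0,0,0,0,4]]"

lemma basis8_unit: "i < 8 \<Longrightarrow> rv (basis8 ! i) = unit_vec 8 i"
  apply (rule eq_vecI)
   apply (simp add: rv_def)
   apply (drule less8, drule less8)
   apply (elim disjE; simp add: basis8_def rv_def)
  apply (simp add: rv_def)
  done

definition eqw :: "g list \<Rightarrow> g list \<Rightarrow> bool" where
  "eqw w1 w2 = list_all (\<lambda>e. wact w1 e \<noteq> None \<and> wact w1 e = wact w2 e) basis8"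

lemma mat8_eqI: fixes A B :: "real mat" assumes A: "A \<in> carrier_mat 8 8" and B: "B \<in> carrier_mat 8 8"
  and h: "\<And>i. i < 8 \<Longrightarrow> A *\<^sub>v unit_vec 8 i = B *\<^sub>v unit_vec 8 i" shows "A = B"
proof (rule eq_matI)
  fix i j assume i: "i < dim_row B" and j: "j < dim_col B"
  hence i8: "i < 8" and j8: "j < 8" using B by auto
  have "(A *\<^sub>v unit_vec 8 j) $ i = row A i \<bullet> unit_vec 8 j" using A i8 by simp
  also have "\<dots> = A $$ (i,j)" using A i8 j8 by (subst scalar_prod_right_unit[OF j8]) simp
  finally have "A $$ (i,j) = (A *\<^sub>v unit_vec 8 j) $ i" by simp
  also have "\<dots> = (B *\<^sub>v unit_vec 8 j) $ i" using h[OF j8] by simp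
  also have "\<dots> = row B i \<bullet> unit_vec 8 j" using B i8 by simp
  also have "\<dots> = B $$ (i,j)" using B i8 j8 by (subst scalar_prod_right_unit[OF j8]) simp
  finally show "A $$ (i,j) = B $$ (i,j)" .
qed (use A B in auto)

lemma eqw_sound: "eqw w1 w2 \<Longrightarrow> word_sem (map gs w1) = word_sem (map gs w2)"
proof (rule mat8_eqI[OF word_carrier word_carrier])
  fix i :: nat assume e: "eqw w1 w2" and i: "i < 8"
  have "basis8 ! i \<in> set basis8" using i by (intro nth_mem) (simp add: basis8_def)
  with e obtain y where y1: "wact w1 (basis8 ! i) = Some y" and y2: "wact w2 (basis8 ! i) = Some y"
    unfolding eqw_def list_all_iff by fastforce
  show "word_sem (map gs w1) *\<^sub>v unit_vec 8 i = word_sem (map gs w2) *\<^sub>v unit_vec 8 i"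
    using wact_sound[OF y1] wact_sound[OF y2] basis8_unit[OF i] by simp
qed

definition Slist :: "g list" where "Slist = [CCX01, K01, CX01, S12]"

fun nonT :: "g \<Rightarrow> bool" where
  "nonT CCX01 = False" | "nonT CCX02 = False" | "nonT CCX12 = False" | "nonT _ = True"

definition Reps :: "g list list" where
  "Reps = [[],
  [CCX01],
  [CCX02],
  [CCX12],
  [CX20, CCX01],
  [CX21, CCX01],
  [CCX02, CCX01],
  [CCX12, CCX01],
  [K01, CCX01],
  [CX10, CCX02],
  [CCX01, CCX02],
  [CCX12, CCX02],
  [CCX01, CCX12],
  [CCX02, CCX12],
  [CX01, CX20, CCX01],
  [CCX02, CX20, CCX01],
  [K01, CX20, CCX01],
  [CCX12, CX21, CCX01],
  [K01, CX21, CCX01],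
  [CCX01, K01, CCX01],
  [CZ01, K01, CCX01],
  [CCX02, K01, CCX01],
  [CCX12, K01, CCX01],
  [CCX01, CX10, CCX02],
  [CCX01, CX01, CX20, CCX01],
  [CCX02, CX01, CX20, CCX01],
  [CCX12, CX01, CX20, CCX01],
  [K01, CX01, CX20, CCX01],
  [K12, CX01, CX20, CCX01],
  [CCX01, K01, CX20, CCX01],
  [CCX02, K01, CX20, CCX01],
  [CCX12, K01, CX20, CCX01],
  [CX02, K01, CX21, CCX01],
  [CCX01, K01, CX21, CCX01],
  [CCX02, K01, CX21, CCX01],
  [CCX12, K01, CX21, CCX01],
  [CCX01, CZ01, K01, CCX01],
  [CCX02, CZ01, K01, CCX01],
  [CCX12, CZ01, K01, CCX01],
  [CX02, K01, CX01, CX20, CCX01],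
  [CCX01, K01, CX01, CX20, CCX01],
  [CCX02, K01, CX01, CX20, CCX01],
  [CCX12, K01, CX01, CX20, CCX01],
  [CCX01, K12, CX01, CX20, CCX01],
  [CCX02, K12, CX01, CX20, CCX01],
  [CCX12, K12, CX01, CX20, CCX01],
  [CCX01, CX02, K01, CX21, CCX01],
  [CCX02, CX02, K01, CX21, CCX01],
  [CCX12, CX02, K01, CX21, CCX01],
  [CCX01, CX02, K01, CX01, CX20, CCX01],
  [CCX02, CX02, K01, CX01, CX20, CCX01],
  [CCX12, CX02, K01, CX01, CX20, CCX01],
  [CCX12, CCX02, CCX01],
  [CCX02, CCX12, CCX01],
  [CCX12, CCX01, CCX02],
  [CCX01, CCX12, CCX02],
  [CCX02, CCX01, CCX12],
  [CCX01, CCX02, CCX12],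
  [CX10, CCX02, CX20, CCX01],
  [CX12, CCX02, CX20, CCX01],
  [K12, CCX12, CX21, CCX01],
  [CX20, CCX01, K01, CCX01],
  [CCX02, CCX01, K01, CCX01],
  [CCX12, CCX01, K01, CCX01],
  [CX10, CCX02, K01, CCX01],
  [CCX01, CCX02, K01, CCX01],
  [CCX12, CCX02, K01, CCX01],
  [CCX01, CCX12, K01, CCX01],
  [CCX02, CCX12, K01, CCX01],
  [CCX02, CCX01, CX01, CX20, CCX01],
  [CCX12, CCX01, CX01, CX20, CCX01],
  [K01, CCX01, CX01, CX20, CCX01],
  [K12, CCX12, CX01, CX20, CCX01],
  [CX20, CCX01, K01, CX20, CCX01],
  [CX21, CCX01, K01, CX20, CCX01],
  [CCX02, CCX01, K01, CX20, CCX01],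
  [CCX12, CCX01, K01, CX20, CCX01],
  [CCX01, CCX02, K01, CX20, CCX01],
  [CCX12, CCX02, K01, CX20, CCX01],
  [CX01, CCX12, K01, CX20, CCX01],
  [CCX01, CCX12, K01, CX20, CCX01],
  [CCX02, CCX12, K01, CX20, CCX01],
  [CX20, CCX01, K01, CX21, CCX01],
  [CX21, CCX01, K01, CX21, CCX01],
  [CCX02, CCX01, K01, CX21, CCX01],
  [CCX12, CCX01, K01, CX21, CCX01],
  [CX10, CCX02, K01, CX21, CCX01],
  [CCX01, CCX02, K01, CX21, CCX01],
  [CCX12, CCX02, K01, CX21, CCX01],
  [CX02, CCX12, K01, CX21, CCX01],
  [CCX01, CCX12, K01, CX21, CCX01],
  [CCX02, CCX12, K01, CX21, CCX01],
  [CCX02, CCX01, CZ01, K01, CCX01],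
  [CCX12, CCX01, CZ01, K01, CCX01],
  [CX10, CCX02, CZ01, K01, CCX01],
  [CX12, CCX02, CZ01, K01, CCX01],
  [CCX01, CCX02, CZ01, K01, CCX01],
  [CCX12, CCX02, CZ01, K01, CCX01],
  [CX02, CCX12, CZ01, K01, CCX01],
  [CCX01, CCX12, CZ01, K01, CCX01],
  [CCX02, CCX12, CZ01, K01, CCX01],
  [CX20, CCX01, K01, CX01, CX20, CCX01],
  [CX21, CCX01, K01, CX01, CX20, CCX01],
  [CCX02, CCX01, K01, CX01, CX20, CCX01],
  [CCX12, CCX01, K01, CX01, CX20, CCX01],
  [K01, CCX01, K01, CX01, CX20, CCX01],
  [CX12, CCX02, K01, CX01, CX20, CCX01],
  [CCX01, CCX02, K01, CX01, CX20, CCX01],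
  [CCX12, CCX02, K01, CX01, CX20, CCX01],
  [CX02, CCX12, K01, CX01, CX20, CCX01],
  [CCX01, CCX12, K01, CX01, CX20, CCX01],
  [CCX02, CCX12, K01, CX01, CX20, CCX01],
  [CCX02, CCX01, K12, CX01, CX20, CCX01],
  [CCX12, CCX01, K12, CX01, CX20, CCX01],
  [CX10, CCX02, K12, CX01, CX20, CCX01],
  [CCX01, CCX02, K12, CX01, CX20, CCX01],
  [CCX12, CCX02, K12, CX01, CX20, CCX01],
  [CX01, CCX12, K12, CX01, CX20, CCX01],
  [CX02, CCX12, K12, CX01, CX20, CCX01],
  [CCX01, CCX12, K12, CX01, CX20, CCX01],
  [CCX02, CCX12, K12, CX01, CX20, CCX01],
  [CCX02, CCX01, CX02, K01, CX21, CCX01],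
  [CCX12, CCX01, CX02, K01, CX21, CCX01],
  [CX10, CCX02, CX02, K01, CX21, CCX01],
  [CX12, CCX02, CX02, K01, CX21, CCX01],
  [CCX01, CCX02, CX02, K01, CX21, CCX01],
  [CCX12, CCX02, CX02, K01, CX21, CCX01],
  [CCX01, CCX12, CX02, K01, CX21, CCX01],
  [CCX02, CCX12, CX02, K01, CX21, CCX01],
  [CCX02, CCX01, CX02, K01, CX01, CX20, CCX01],
  [CCX12, CCX01, CX02, K01, CX01, CX20, CCX01],
  [K01, CCX01, CX02, K01, CX01, CX20, CCX01],
  [CCX01, CCX02, CX02, K01, CX01, CX20, CCX01],
  [CCX12, CCX02, CX02, K01, CX01, CX20, CCX01],
  [CCX01, CCX12, CX02, K01, CX01, CX20, CCX01],
  [CCX02, CCX12, CX02, K01, CX01, CX20, CCX01],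
  [CCX12, K12, CCX12, CX21, CCX01],
  [CCX02, CX20, CCX01, K01, CCX01],
  [CCX01, CX10, CCX02, K01, CCX01],
  [CCX01, K01, CCX01, CX01, CX20, CCX01],
  [CCX12, K12, CCX12, CX01, CX20, CCX01],
  [CX01, CX20, CCX01, K01, CX20, CCX01],
  [CCX02, CX20, CCX01, K01, CX20, CCX01],
  [CX10, CX21, CCX01, K01, CX20, CCX01],
  [CCX12, CX21, CCX01, K01, CX20, CCX01],
  [CX12, CX01, CCX12, K01, CX20, CCX01],
  [CCX01, CX01, CCX12, K01, CX20, CCX01],
  [CX21, CX20, CCX01, K01, CX21, CCX01],
  [CCX02, CX20, CCX01, K01, CX21, CCX01],
  [CCX12, CX21, CCX01, K01, CX21, CCX01],
  [CX02, CX10, CCX02, K01, CX21, CCX01],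
  [CCX01, CX10, CCX02, K01, CX21, CCX01],
  [CCX02, CX02, CCX12, K01, CX21, CCX01],
  [CX02, CX10, CCX02, CZ01, K01, CCX01],
  [CCX01, CX10, CCX02, CZ01, K01, CCX01],
  [CCX12, CX12, CCX02, CZ01, K01, CCX01],
  [CCX02, CX02, CCX12, CZ01, K01, CCX01],
  [CCX02, CX20, CCX01, K01, CX01, CX20, CCX01],
  [CCX12, CX21, CCX01, K01, CX01, CX20, CCX01],
  [CCX01, K01, CCX01, K01, CX01, CX20, CCX01],
  [CCX02, K01, CCX01, K01, CX01, CX20, CCX01],
  [CCX12, K01, CCX01, K01, CX01, CX20, CCX01],
  [CCX12, CX12, CCX02, K01, CX01, CX20, CCX01],
  [CCX02, CX02, CCX12, K01, CX01, CX20, CCX01],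
  [CCX01, CX10, CCX02, K12, CX01, CX20, CCX01],
  [CCX01, CX01, CCX12, K12, CX01, CX20, CCX01],
  [CCX02, CX02, CCX12, K12, CX01, CX20, CCX01],
  [CCX01, CX10, CCX02, CX02, K01, CX21, CCX01],
  [CCX12, CX12, CCX02, CX02, K01, CX21, CCX01],
  [CCX01, K01, CCX01, CX02, K01, CX01, CX20, CCX01],
  [CCX02, K01, CCX01, CX02, K01, CX01, CX20, CCX01],
  [CCX12, K01, CCX01, CX02, K01, CX01, CX20, CCX01],
  [CCX01, CX01, CX20, CCX01, K01, CX20, CCX01],
  [CCX02, CX01, CX20, CCX01, K01, CX20, CCX01],
  [CCX12, CX01, CX20, CCX01, K01, CX20, CCX01],
  [CCX01, CX10, CX21, CCX01, K01, CX20, CCX01],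
  [CCX02, CX10, CX21, CCX01, K01, CX20, CCX01],
  [CCX12, CX10, CX21, CCX01, K01, CX20, CCX01],
  [CCX01, CX12, CX01, CCX12, K01, CX20, CCX01],
  [CCX02, CX12, CX01, CCX12, K01, CX20, CCX01],
  [CCX12, CX12, CX01, CCX12, K01, CX20, CCX01],
  [CCX01, CX21, CX20, CCX01, K01, CX21, CCX01],
  [CCX02, CX21, CX20, CCX01, K01, CX21, CCX01],
  [CCX12, CX21, CX20, CCX01, K01, CX21, CCX01],
  [CCX01, CX02, CX10, CCX02, K01, CX21, CCX01],
  [CCX02, CX02, CX10, CCX02, K01, CX21, CCX01],
  [CCX12, CX02, CX10, CCX02, K01, CX21, CCX01],
  [CCX01, CX02, CX10, CCX02, CZ01, K01, CCX01],
  [CCX02, CX02, CX10, CCX02, CZ01, K01, CCX01],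
  [CCX12, CX02, CX10, CCX02, CZ01, K01, CCX01],
  [CCX12, CCX02, CCX01, K01, CCX01],
  [CCX02, CCX12, CCX01, K01, CCX01],
  [CCX12, CCX01, CCX02, K01, CCX01],
  [CCX01, CCX12, CCX02, K01, CCX01],
  [CCX02, CCX01, CCX12, K01, CCX01],
  [CCX01, CCX02, CCX12, K01, CCX01],
  [CCX12, CCX02, CCX01, K01, CX20, CCX01],
  [CCX02, CCX12, CCX01, K01, CX20, CCX01],
  [CCX12, CCX01, CCX02, K01, CX20, CCX01],
  [CCX01, CCX12, CCX02, K01, CX20, CCX01],
  [CCX02, CCX01, CCX12, K01, CX20, CCX01],
  [CCX01, CCX02, CCX12, K01, CX20, CCX01],
  [CCX12, CCX02, CCX01, K01, CX21, CCX01],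
  [CCX02, CCX12, CCX01, K01, CX21, CCX01],
  [CCX12, CCX01, CCX02, K01, CX21, CCX01],
  [CCX01, CCX12, CCX02, K01, CX21, CCX01],
  [CCX02, CCX01, CCX12, K01, CX21, CCX01],
  [CCX01, CCX02, CCX12, K01, CX21, CCX01],
  [CCX12, CCX02, CCX01, CZ01, K01, CCX01],
  [CCX02, CCX12, CCX01, CZ01, K01, CCX01],
  [CCX12, CCX01, CCX02, CZ01, K01, CCX01],
  [CCX01, CCX12, CCX02, CZ01, K01, CCX01],
  [CCX02, CCX01, CCX12, CZ01, K01, CCX01],
  [CCX01, CCX02, CCX12, CZ01, K01, CCX01],
  [CCX12, CCX02, CCX01, K01, CX01, CX20, CCX01],
  [CCX02, CCX12, CCX01, K01, CX01, CX20, CCX01],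
  [CCX12, CCX01, CCX02, K01, CX01, CX20, CCX01],
  [CCX01, CCX12, CCX02, K01, CX01, CX20, CCX01],
  [CCX02, CCX01, CCX12, K01, CX01, CX20, CCX01],
  [CCX01, CCX02, CCX12, K01, CX01, CX20, CCX01],
  [CCX12, CCX02, CCX01, K12, CX01, CX20, CCX01],
  [CCX02, CCX12, CCX01, K12, CX01, CX20, CCX01],
  [CCX12, CCX01, CCX02, K12, CX01, CX20, CCX01],
  [CCX01, CCX12, CCX02, K12, CX01, CX20, CCX01],
  [CCX02, CCX01, CCX12, K12, CX01, CX20, CCX01],
  [CCX01, CCX02, CCX12, K12, CX01, CX20, CCX01],
  [CCX12, CCX02, CCX01, CX02, K01, CX21, CCX01],
  [CCX02, CCX12, CCX01, CX02, K01, CX21, CCX01],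
  [CCX12, CCX01, CCX02, CX02, K01, CX21, CCX01],
  [CCX01, CCX12, CCX02, CX02, K01, CX21, CCX01],
  [CCX02, CCX01, CCX12, CX02, K01, CX21, CCX01],
  [CCX01, CCX02, CCX12, CX02, K01, CX21, CCX01],
  [CCX12, CCX02, CCX01, CX02, K01, CX01, CX20, CCX01],
  [CCX02, CCX12, CCX01, CX02, K01, CX01, CX20, CCX01],
  [CCX12, CCX01, CCX02, CX02, K01, CX01, CX20, CCX01],
  [CCX01, CCX12, CCX02, CX02, K01, CX01, CX20, CCX01],
  [CCX02, CCX01, CCX12, CX02, K01, CX01, CX20, CCX01],
  [CCX01, CCX02, CCX12, CX02, K01, CX01, CX20, CCX01],
  [CX01, CCX12, K12, CCX12, CX21, CCX01],
  [CX02, CCX12, K12, CCX12, CX21, CCX01],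
  [CX20, CCX01, K01, CCX01, CX01, CX20, CCX01],
  [CX21, CCX01, K01, CCX01, CX01, CX20, CCX01],
  [CX01, CCX12, K12, CCX12, CX01, CX20, CCX01],
  [CX02, CCX12, K12, CCX12, CX01, CX20, CCX01],
  [CX01, CCX12, CX21, CCX01, K01, CX20, CCX01],
  [CX02, CCX12, CX21, CCX01, K01, CX20, CCX01],
  [CX10, CCX02, CX20, CCX01, K01, CX21, CCX01],
  [CX12, CCX02, CX20, CCX01, K01, CX21, CCX01],
  [CX01, CCX12, CX21, CCX01, K01, CX21, CCX01],
  [CX10, CCX02, CX02, CCX12, K01, CX21, CCX01],
  [CX01, CCX12, CX12, CCX02, CZ01, K01, CCX01],
  [CX02, CCX12, CX12, CCX02, CZ01, K01, CCX01],
  [CX10, CCX02, CX20, CCX01, K01, CX01, CX20, CCX01],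
  [CX01, CCX12, CX21, CCX01, K01, CX01, CX20, CCX01],
  [CCX02, CCX01, K01, CCX01, K01, CX01, CX20, CCX01],
  [CCX12, CCX01, K01, CCX01, K01, CX01, CX20, CCX01],
  [CCX01, CCX02, K01, CCX01, K01, CX01, CX20, CCX01],
  [CCX12, CCX02, K01, CCX01, K01, CX01, CX20, CCX01],
  [CCX01, CCX12, K01, CCX01, K01, CX01, CX20, CCX01],
  [CCX02, CCX12, K01, CCX01, K01, CX01, CX20, CCX01],
  [CCX02, CCX01, K01, CCX01, CX02, K01, CX01, CX20, CCX01],
  [CCX12, CCX01, K01, CCX01, CX02, K01, CX01, CX20, CCX01],
  [CCX02, CCX01, CX01, CX20, CCX01, K01, CX20, CCX01],
  [CCX12, CCX01, CX01, CX20, CCX01, K01, CX20, CCX01],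
  [CCX01, CCX02, CX10, CX21, CCX01, K01, CX20, CCX01],
  [CCX01, CCX12, CX10, CX21, CCX01, K01, CX20, CCX01],
  [CCX02, CCX01, CX21, CX20, CCX01, K01, CX21, CCX01],
  [CCX12, CCX01, CX21, CX20, CCX01, K01, CX21, CCX01],
  [CCX02, CCX01, CX02, CX10, CCX02, CZ01, K01, CCX01],
  [CCX12, CCX01, CX02, CX10, CCX02, CZ01, K01, CCX01]]"

definition rep :: "nat \<Rightarrow> g list" where "rep n = Reps ! n"

definition chk_row :: "nat \<times> (nat \<times> g list) list \<Rightarrow> bool" where
  "chk_row r = (case r of (i, L) \<Rightarrow> list_all2 (\<lambda>s p. case p of (j, h) \<Rightarrow> j < 270 \<and> list_all nonT h \<and> eqw (s # rep i) (rep j @ h)) Slist L)"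

definition RT0 :: "(nat \<times> (nat \<times> g list) list) list" where
  "RT0 = [(0, [(1, []), (0, [K01]), (0, [CX01]), (0, [S12])]),
  (1, [(0, []), (8, []), (1, [CX02, CX01]), (2, [S12])]),
  (2, [(10, []), (3, [K01]), (2, [CX01]), (1, [S12])]),
  (3, [(12, []), (2, [K01]), (9, [CX10, CX01]), (3, [S12])]),
  (4, [(7, [CX20]), (16, []), (14, []), (9, [S12])]),
  (5, [(6, [CX21]), (18, []), (5, [CX02, CX01]), (5, [CX12])]),
  (6, [(5, [CX21]), (22, []), (6, [CX02, CX01]), (10, [S12])]),
  (7, [(4, [CX20]), (21, []), (23, [CX10, CX02, CX01]), (11, [S12])]),
  (8, [(19, []), (1, []), (8, [CX12, CX10]), (8, [K12, S12])]),
  (9, [(23, []), (9, [K01, S01, CX01]), (3, [S01, CX01]), (4, [S12])]),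
  (10, [(2, []), (35, [CX21]), (10, [CX02]), (6, [S12])]),
  (11, [(55, []), (13, [K01]), (13, [CX01]), (7, [S12])]),
  (12, [(3, []), (30, [CX20]), (24, [CX20, CX02]), (13, [S12])]),
  (13, [(57, []), (11, [K01]), (11, [CX01]), (12, [S12])]),
  (14, [(24, []), (27, []), (4, []), (14, [S01, CX12, CX02])]),
  (15, [(54, [CX20]), (31, []), (25, []), (23, [S12])]),
  (16, [(29, []), (4, []), (16, [CX12, CX10]), (20, [K12, S12])]),
  (17, [(56, [CX21]), (34, []), (59, [CX21, CX10, CX02, CX01]), (17, [CX12])]),
  (18, [(33, []), (5, []), (27, [S01, CX02, CX01]), (18, [K12, S12])]),
  (19, [(8, []), (36, [K01, CZ01]), (19, [K01, CX02, K01, CX10]), (21, [K12, S12])]),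
  (20, [(36, []), (20, [S01, CZ01]), (20, [CX10, X0]), (16, [K12, S12])]),
  (21, [(65, []), (7, []), (21, [CX12, CX10]), (19, [K12, S12])]),
  (22, [(67, []), (6, []), (64, [S01, CX02, CX01]), (22, [K12, S12])]),
  (23, [(9, []), (64, [S01, CX12, CX01]), (7, [S01, CX12, CX01]), (15, [S12])]),
  (24, [(14, []), (71, []), (12, [S02, CX02]), (25, [S01, CX12, CX02])]),
  (25, [(70, [CX21, CX01]), (42, []), (15, []), (24, [S01, CX12, CX02])]),
  (26, [(69, [S02, CX21, CX01]), (41, []), (58, [CX12, CX10]), (26, [S01, CX12, CX02])])]"
lemma chk0: "list_all chk_row RT0 \<and> map fst RT0 = [0..<27]"
  by code_simp

definition RT1 :: "(nat \<times> (nat \<times> g list) list) list" where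
  "RT1 = [(27, [(40, []), (14, []), (18, [CX02, CX10, CX01]), (32, [K12, S12, CX02, CX10, CX01])]),
  (28, [(43, []), (32, [K12, S12, CX01, CX12]), (28, [CZ12, CZ01, Z2, Z0]), (28, [S01, CX12, CX02])]),
  (29, [(16, []), (61, [CZ01, K01]), (29, [K01, CX02, K01, CX12, CX10, X0]), (37, [K12, S12])]),
  (30, [(77, []), (12, [CX20]), (30, [CX12, CX10]), (36, [K12, S12])]),
  (31, [(80, []), (15, []), (79, []), (38, [K12, S12])]),
  (32, [(46, []), (28, [K12, CX12, CZ02, CX21]), (39, [S01, CX02, CX01]), (27, [S12, K01, S02, CZ02, CZ01])]),
  (33, [(18, []), (60, [K12, S12, CX12]), (49, [S01, CX02, CX01]), (34, [K12, S12])]),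
  (34, [(87, []), (17, []), (41, [S01, CX02, CX01]), (33, [K12, S12])]),
  (35, [(90, []), (10, [CX21]), (71, [S02, S01, CX02, CX01]), (35, [K12, S12])]),
  (36, [(20, []), (19, [CZ01, K01]), (36, [K01, CX02, K01, CX12, CX10, X0]), (30, [K12, S12])]),
  (37, [(96, []), (38, [S01, CZ01]), (37, [CX10, X0]), (29, [K12, S12])]),
  (38, [(99, []), (37, [S01, CZ01]), (94, [S01, CX01, X1]), (31, [K12, S12])]),
  (39, [(49, []), (39, [K12, S12, CZ01, X0, CX02]), (32, [CX02, CX10, CX01]), (39, [K12, K01, CX02, CZ12, CX20, CX10, CX02])]),
  (40, [(27, []), (105, []), (46, [CX02, CX10, CX01]), (47, [K12, S12, CX02, CX10, CX01])]),
  (41, [(107, []), (26, []), (34, [CX02, CX10, CX01]), (46, [K12, S12, CX02, CX10, CX01])]),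
  (42, [(110, []), (25, []), (86, [S01]), (48, [K12, S12, CX02, CX10, CX01])]),
  (43, [(28, []), (89, [K12, CX01, CX12]), (43, [CZ12, CZ02, CZ01, Z0]), (44, [S01, CX12, CX02])]),
  (44, [(115, []), (48, [K12, S12, CX01, CX12]), (44, [CZ12, CZ01, Z2, Z0]), (43, [S01, CX12, CX02])]),
  (45, [(119, []), (47, [K12, S12, CX01, CX12]), (117, []), (45, [S01, CX12, CX02])]),
  (46, [(32, []), (72, [K12, CX12, CZ02, CX21]), (40, [S01, CX02, CX01]), (41, [S12, K01, S02, CZ02, CZ01])]),
  (47, [(125, []), (45, [K12, CX12, CZ02, CX21]), (50, [S01, CX02, CX01]), (40, [S12, K01, S02, CZ02, CZ01])]),
  (48, [(127, []), (44, [K12, CX12, CZ02, CX21]), (114, [CZ12, CX10, K12, S12, CZ02, CX02, X1]), (42, [S12, K01, S02, CZ02, CZ01])]),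
  (49, [(39, []), (131, []), (33, [CX02, CX10, CX01]), (50, [K12, K01, CX02, CZ12, CX20, CX10, CX02])]),
  (50, [(132, []), (51, [K12, S12, CZ01, X0, CX02]), (47, [CX02, CX10, CX01]), (49, [K12, K01, CX02, CZ12, CX20, CX10, CX02])]),
  (51, [(134, []), (50, [K12, S12, CZ01, X0, CX02]), (123, [K01, CX12, K01, S01, X0]), (51, [K12, K01, CX02, CZ12, CX20, CX10, CX02])]),
  (52, [(58, [CX20, CX12]), (68, []), (53, [CX02, CX01]), (54, [S12])]),
  (53, [(59, [CX20, CX10]), (66, []), (52, [CX02, CX01]), (55, [S12])])]"
lemma chk1: "list_all chk_row RT1 \<and> map fst RT1 = [27..<54]"
  by code_simp

definition RT2 :: "(nat \<times> (nat \<times> g list) list) list" where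
  "RT2 = [(54, [(15, [CX20]), (91, [CX21]), (57, [CX02]), (52, [S12])]),
  (55, [(11, []), (81, [CX20]), (70, [CX20, CX02]), (53, [S12])]),
  (56, [(17, [CX21]), (78, [CX20]), (69, [CX20, CX02]), (57, [S12])]),
  (57, [(13, []), (88, [CX21]), (54, [CX02]), (56, [S12])]),
  (58, [(52, [CX12, CX20]), (79, []), (26, [CX12, CX10]), (59, [S12, CX12])]),
  (59, [(53, [CX20, CX10]), (86, [S02, S01, CX12, CX01]), (17, [S02, S01, CX12, CX01]), (58, [CX21, CX12])]),
  (60, [(62, [K12, K01, CX21]), (33, [K12, S12, CX12]), (60, [CZ12, CZ02, Z2]), (60, [CX12])]),
  (61, [(63, [CZ02, CZ01]), (29, [K01, CZ01]), (131, [K01, CZ01, CX02, Z0]), (64, [K12, S12])]),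
  (62, [(60, [K12, CX12, K01]), (93, [K01, CZ01]), (62, [K01, CX02, K01, CX10]), (65, [K12, S12])]),
  (63, [(61, [CZ02, CZ01]), (92, [K01, CZ01]), (138, [CX02, K01, CX10, CX02, K01, CX10]), (66, [K12, S12])]),
  (64, [(138, []), (23, [CX10, CX02, CX01]), (22, [CX02, CX10, CX01]), (61, [K12, S12])]),
  (65, [(21, []), (85, [K01, CZ12]), (65, [K01, CX02, K01, CX12]), (62, [K12, S12])]),
  (66, [(193, []), (53, []), (68, [CX12, CX10]), (63, [K12, S12])]),
  (67, [(22, []), (75, [K01, CZ02]), (169, [K12, S02, CZ02, CX12, CX02, X2]), (68, [K12, S12])]),
  (68, [(195, []), (52, []), (66, [CX12, CX10]), (67, [K12, S12])]),
  (69, [(26, [S02, CX21, CX01]), (111, [S02]), (56, [S02, CX02]), (70, [CX21, CX12, CX10, CX01])]),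
  (70, [(25, [CX21, CX01]), (108, [S02]), (55, [S02, CX02]), (69, [S02, S01, CX12, CX02])]),
  (71, [(139, []), (24, []), (35, [S12, CX02, CX10, CX01]), (89, [K12, CX02, CX10, CX01])]),
  (72, [(112, [S02, CX21, CX01]), (46, [K12, S12, CX01, CX12]), (72, [CZ02, Z0]), (72, [S01, CX12, CX02])]),
  (73, [(76, [CZ02, Z2]), (73, [K01, Z2]), (141, []), (94, [K12, S12])]),
  (74, [(75, [CZ12, CZ01]), (98, [CX12, K01, S02, CX02]), (74, [K01, CX02, K01, CX12, CX10, X0]), (95, [K12, S12])]),
  (75, [(74, [CZ12, CZ01]), (67, [K01, CX20]), (75, [K01, CX02, K01, CX12, CX10, X0]), (96, [K12, S12])]),
  (76, [(73, [CZ02, Z2]), (137, [CZ01, K01]), (146, [K01, CX02, K01, X0]), (97, [K12, S12])]),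
  (77, [(30, []), (99, [K01, CZ01, CX20]), (77, [K01, CX02, K01, X0]), (92, [K12, S12])]),
  (78, [(199, []), (56, [CX20]), (81, [CX12, CX10]), (93, [K12, S12])]),
  (79, [(146, []), (58, []), (31, []), (98, [K12, S12])]),
  (80, [(31, []), (142, [K01, CZ02]), (172, [K12, K01, S02, CZ02, Z2]), (100, [K12, S12])])]"
lemma chk2: "list_all chk_row RT2 \<and> map fst RT2 = [54..<81]"
  by code_simp

definition RT3 :: "(nat \<times> (nat \<times> g list) list) list" where
  "RT3 = [(81, [(201, []), (55, [CX20]), (78, [CX12, CX10]), (99, [K12, S12])]),
  (82, [(85, [CZ02, CZ01]), (95, [CX02, K01, S12, CX12]), (143, [K01, CX02, K01, S01, CX02, CX01, X1]), (86, [K12, S12])]),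
  (83, [(84, [CZ12, Z2]), (83, [K01, Z2]), (124, [CZ12, K12, S12, X1]), (83, [K01, CX12, K01, X1])]),
  (84, [(83, [CZ12, Z2]), (136, [K12, S12, CX12]), (129, [S01, CX02, CX01]), (87, [K12, S12])]),
  (85, [(82, [CZ02, CZ01]), (65, [K01, CX21]), (164, [CZ12, CX10, K12, S12, CZ02, CX02, X1]), (88, [K12, S12])]),
  (86, [(151, []), (59, [CX21, CX10, CX02, CX01]), (42, [S01]), (82, [K12, S12])]),
  (87, [(34, []), (149, [K01, CZ12]), (125, []), (84, [K12, S12])]),
  (88, [(205, []), (57, [CX21]), (111, [S01, CX02, CX01]), (85, [K12, S12])]),
  (89, [(122, []), (43, [K12, CX21, CZ01]), (105, [K12, S02, CZ02, CX21]), (71, [S01, K12, CZ02, CZ01])]),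
  (90, [(35, []), (96, [K01, CZ01, CX21]), (159, [K12, S02, CZ02, CX21]), (91, [K12, S12])]),
  (91, [(207, []), (54, [CX21]), (108, [S01, CX02, CX01]), (90, [K12, S12])]),
  (92, [(95, [K01, CX12, K01, CX02]), (63, [CZ01, K01]), (92, [K01, CX02, K01, CX12, CX10, X0]), (77, [K12, S12])]),
  (93, [(98, [K01, CX02, K01, CX12]), (62, [CZ01, K01]), (154, [K01, Z0, CX10, CX02, K01, CX12, CX10]), (78, [K12, S12])]),
  (94, [(154, []), (94, [CZ01, CX10, X0]), (38, [CX10, CX01, X0]), (73, [K12, S12])]),
  (95, [(92, [K01, CX12, K01, CX02]), (82, [S12, K01, CZ12, CX02]), (95, [K01, CX02, K01, CX12]), (74, [K12, S12])]),
  (96, [(37, []), (90, [CX21, CZ01, K01]), (96, [K01, CX02, K01, CX12]), (75, [K12, S12])]),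
  (97, [(211, []), (100, [S01, CZ01]), (100, [CX10, X0]), (76, [K12, S12])]),
  (98, [(93, [K01, CX02, K01, CX12]), (74, [K12, S02, CZ02, CX12]), (153, [S01, CX01, X1]), (79, [K12, S12])]),
  (99, [(38, []), (77, [CX20, CZ01, K01]), (187, [S01, CX01, X1]), (81, [K12, S12])]),
  (100, [(213, []), (97, [S01, CZ01]), (97, [CX10, X0]), (80, [K12, S12])]),
  (101, [(104, [CZ02, Z2]), (150, [CX20, K12, S12, CX12, Z2, CX02]), (145, [K01, CX02, K01, CZ02, X0]), (123, [K12, S12, CX02, CX10, CX01])]),
  (102, [(103, [CZ12, CZ02, CZ01, Z2]), (145, [CX12, K01, CZ12, CX02, CX10, Z0, CX20]), (106, [CX20, K12, CX02, K01, CZ12, CX20, CX02]), (124, [K12, S12, CX02, CX10, CX01])]),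
  (103, [(102, [CZ12, CZ02, CZ01, Z2]), (161, []), (121, [CX02, CX10, CX01]), (125, [K12, S12, CX02, CX10, CX01])]),
  (104, [(101, [CZ02, Z2]), (160, []), (167, [K01, CX12, K01, S01, X0]), (126, [K12, S12, CX02, CX10, CX01])]),
  (105, [(159, []), (40, []), (89, [K01, S02, CZ01, CX02]), (105, [S01, CX12, CX02])]),
  (106, [(129, [K01, CX02, K01, X0]), (106, [CX10, K12, CZ02, X0, CX02, CX10]), (102, [K12, K01, S02, CX12, CX10, CZ02, Z2]), (106, [CZ12, CZ02, CZ01, Z2])]),
  (107, [(41, []), (180, [CX12, K01, S02, CZ02, CX02, CX10]), (132, []), (121, [K12, S12, CX02, CX10, CX01])])]"
lemma chk3: "list_all chk_row RT3 \<and> map fst RT3 = [81..<108]"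
  by code_simp

definition RT4 :: "(nat \<times> (nat \<times> g list) list) list" where
  "RT4 = [(108, [(217, []), (70, [S02]), (91, [CX02, CX10, CX01]), (122, [K12, S12, CX02, CX10, CX01])]),
  (109, [(130, []), (109, [K12, CZ02, CX21, CX12, X0, CX02]), (150, [S01]), (114, [CX10, CX02, CZ12, S01, Z2])]),
  (110, [(42, []), (185, [CX20, K12, CX12, CZ02, CX21, CX02]), (184, [S01]), (128, [K12, S12, CX02, CX10, CX01])]),
  (111, [(219, []), (69, [S02]), (88, [CX02, CX10, CX01]), (127, [K12, S12, CX02, CX10, CX01])]),
  (112, [(72, [S02, CX21, CX01]), (127, [K12, CX01, CX12]), (112, [CZ12, CZ02, CZ01, Z0]), (115, [S01, CX12, CX02])]),
  (113, [(118, [CZ02, Z2]), (152, [K12, CX01, CX12]), (165, [CZ02, Z2]), (116, [S01, CX12, CX02])]),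
  (114, [(164, []), (114, [CX02, CZ12, CX10, Z2, CX02]), (48, [K12, S12, CZ01, CX01, CZ12, CX10, Z2]), (109, [CZ02, Z2, CX12, CX10, CX01])]),
  (115, [(44, []), (122, [K12, S02, CX21, CX10]), (115, [CZ02, Z2]), (112, [S01, CX12, CX02])]),
  (116, [(223, []), (128, [K12, S12, CX01, CX12]), (120, [CZ12, CZ01, Z2, Z0]), (113, [S01, CX12, CX02])]),
  (117, [(165, []), (123, [K12, S12, CX01, CX12]), (45, []), (118, [S01, CX12, CX02])]),
  (118, [(113, [CZ02, Z2]), (141, [CX02, K01, CX01, Z2]), (147, [CX02, CX10]), (117, [S01, CX12, CX02])]),
  (119, [(45, []), (173, [CX02, K01, CZ02, CX01]), (181, [CX02, CX10]), (120, [S01, CX12, CX02])]),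
  (120, [(225, []), (126, [K12, S12, CX01, CX12]), (116, [CZ12, CZ01, Z2, Z0]), (119, [S01, CX12, CX02])]),
  (121, [(124, [K01, CX12, K01, X1]), (140, [K12, CX12, CZ02, CX21]), (103, [S01, CX02, CX01]), (107, [S12, K01, S02, CZ02, CZ01])]),
  (122, [(89, []), (115, [K01, S02, CX21, CZ01]), (139, [S02, S01, CX02, CX01]), (108, [S12, K01, S02, CZ02, CZ01])]),
  (123, [(167, []), (117, [K12, CX12, CZ02, CX21]), (51, [K01, CX02, K01, S01, X1]), (101, [S12, K01, S02, CZ02, CZ01])]),
  (124, [(121, [K01, CX12, K01, X1]), (147, [CX21, CX12, CX02, K01, X1, CX12]), (83, [K12, S12, CZ12, Z2]), (102, [S12, K01, S02, CZ02, CZ01])]),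
  (125, [(47, []), (183, [CX21, CX02, K01, CX12]), (87, []), (103, [S12, K01, S02, CZ02, CZ01])]),
  (126, [(229, []), (120, [K12, CX12, CZ02, CX21]), (135, [S01, CX02, CX01]), (104, [S12, K01, S02, CZ02, CZ01])]),
  (127, [(48, []), (112, [K12, CX21, CZ01]), (175, [CZ01, K01, CX21, CX02, K01, S01, X1]), (111, [S12, K01, S02, CZ02, CZ01])]),
  (128, [(231, []), (116, [K12, CX12, CZ02, CX21]), (133, [S01, CX02, CX01]), (110, [S12, K01, S02, CZ02, CZ01])]),
  (129, [(106, [K01, CX02, K01, X0]), (171, []), (84, [CX02, CX10, CX01]), (132, [K12, K01, CX02, CZ12, CX20, CX10, CX02])]),
  (130, [(109, []), (170, []), (151, [S01]), (133, [K12, K01, CX02, CZ12, CX20, CX10, CX02])]),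
  (131, [(169, []), (49, []), (61, [CZ01, CX02, K01, X0]), (131, [K01, CX10, CX02, K01, CX12, CX10, X0, CX01])]),
  (132, [(50, []), (162, [K01, S02, CZ02, CX21, CX02, CX10]), (107, []), (129, [K12, K01, CX02, CZ12, CX20, CX10, CX02])]),
  (133, [(235, []), (135, [K12, S12, CZ01, X0, CX02]), (128, [CX02, CX10, CX01]), (130, [K12, K01, CX02, CZ12, CX20, CX10, CX02])]),
  (134, [(51, []), (163, [K12, CZ02, CX21, CX12, X0, CX02]), (178, [K01, CX02, K01, X0]), (135, [K12, K01, CX02, CZ12, CX20, CX10, CX02])])]"
lemma chk4: "list_all chk_row RT4 \<and> map fst RT4 = [108..<135]"
  by code_simp

definition RT5 :: "(nat \<times> (nat \<times> g list) list) list" where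
  "RT5 = [(135, [(237, []), (133, [K12, S12, CZ01, X0, CX02]), (126, [CX02, CX10, CX01]), (134, [K12, K01, CX02, CZ12, CX20, CX10, CX02])]),
  (136, [(194, [K12, K01, CX21]), (84, [K12, S12, CX12]), (238, []), (136, [CX12])]),
  (137, [(192, [CZ02, CZ01]), (76, [K01, CZ01]), (170, [K01, CZ01, CX02, Z0]), (138, [K12, S12])]),
  (138, [(64, []), (154, [K01, CZ01, CX10, CX02, CX01]), (63, [K01, CX02, K01, CX10, CX02, CX01]), (137, [K12, S12])]),
  (139, [(71, []), (175, [CZ01, K01, CZ02, CX02, CX10, CX01]), (122, [S12, CX02, CX10, CX01]), (152, [K12, CX02, CX10, CX01])]),
  (140, [(224, [S02, CX21, CX01]), (121, [K12, S12, CX01, CX12]), (242, []), (140, [S01, CX12, CX02])]),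
  (141, [(172, []), (118, [K01, CX10, Z2, CX02]), (73, []), (153, [K12, S12])]),
  (142, [(198, [CZ02, Z2]), (80, [K01, CX20]), (173, []), (154, [K12, S12])]),
  (143, [(175, []), (153, [X0, CX01, CX12, K01, S02, CX21, CX02]), (82, [K01, CX12, K01, CX02, CX10, CX01, X0]), (150, [CZ12, K12, S12, CX02, CX10, CX01, X0])]),
  (144, [(200, [CZ12, CZ01]), (156, [CX12, K01, S02, CX02]), (244, []), (155, [K12, S12])]),
  (145, [(178, []), (102, [CZ01, CX10, K12, S02, CZ02, CX12, X0]), (101, [K12, K01, S02, CZ02, Z2]), (145, [CZ12, CZ02, CZ01, Z2])]),
  (146, [(79, []), (239, [CZ12, K12, S02, CX21, X0, CX02]), (76, [K01, CX02, K01, X0]), (156, [K12, S12])]),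
  (147, [(181, []), (124, [CX12, K01, S12, CX01, Z2, CX12]), (118, [CX10, CX02]), (147, [CX02, CX01])]),
  (148, [(204, [CZ02, CZ01]), (155, [CX02, K01, S12, CX12]), (176, [K01, CX02, K01, S01, CX02, CX01, X1]), (151, [K12, S12])]),
  (149, [(206, [CZ12, Z2]), (87, [K01, CX21]), (248, []), (149, [K01, CX12, K01, X1])]),
  (150, [(184, []), (101, [K12, S12, CZ01, X1, CX12, CX20]), (109, [S01]), (143, [S12, K01, CZ01, S02, CZ02, CZ01, Z2])]),
  (151, [(86, []), (238, [CX21, CZ12, K12, CX21]), (130, [S01]), (148, [K12, S12])]),
  (152, [(228, []), (113, [K12, CX21, CZ01]), (160, [K12, S02, CZ02, CX21]), (139, [S01, K12, CZ02, CZ01])]),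
  (153, [(187, []), (143, [K12, S02, CZ02, CX12, CX10, CX01, X0]), (98, [CX10, CX01, X0]), (141, [K12, S12])]),
  (154, [(94, []), (138, [CX02, CX10, CZ01, K01, S01]), (93, [K01, CX02, K01, CX12, CX10, CX01, X0]), (142, [K12, S12])]),
  (155, [(212, [K01, CX12, K01, CX02]), (148, [S12, K01, CZ12, CX02]), (250, []), (144, [K12, S12])]),
  (156, [(210, [K01, CX02, K01, CX12]), (144, [K12, S02, CZ02, CX12]), (188, [S01, CX01, X1]), (146, [K12, S12])]),
  (157, [(216, [CZ02, Z2]), (186, [CX20, K12, S12, CX12, Z2, CX02]), (179, [K01, CX02, K01, CZ02, X0]), (167, [K12, S12, CX02, CX10, CX01])]),
  (158, [(218, [CZ12, CZ02, CZ01, Z2]), (179, [CX12, K01, CZ12, CX02, CX10, Z0, CX20]), (253, []), (168, [K12, S12, CX02, CX10, CX01])]),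
  (159, [(105, []), (187, [K01, CZ01, K01, S02, CX02, CX10]), (90, [K01, S02, CZ01, CX02]), (160, [S01, CX12, CX02])]),
  (160, [(256, []), (104, []), (152, [K01, S02, CZ01, CX02]), (159, [S01, CX12, CX02])]),
  (161, [(258, []), (103, []), (249, [K01, S02, CZ01, CX10, CX02]), (161, [S01, CX12, CX02])])]"
lemma chk5: "list_all chk_row RT5 \<and> map fst RT5 = [135..<162]"
  by code_simp

definition RT6 :: "(nat \<times> (nat \<times> g list) list) list" where
  "RT6 = [(162, [(236, [K01, CX02, K01, X0]), (132, [CX10, K12, CZ02, CX12, CX20, CX02]), (240, [K12, K01, CX12, CX10, CZ02, Z2]), (162, [CZ12, CZ02, CZ01, Z2])]),
  (163, [(234, []), (134, [K12, CZ02, CX21, CX12, X0, CX02]), (185, [S01]), (164, [CX10, CX02, CZ12, S01, Z2])]),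
  (164, [(114, []), (169, [K12, K01, CZ02, CX21, Z0]), (85, [K12, S12, CZ01, CX01, CZ12, CX10, Z2]), (163, [CZ02, Z2, CX12, CX10, CX01])]),
  (165, [(117, []), (249, [K12, CX01, CX12, CZ02, Z2]), (113, [CZ02, Z2]), (166, [S01, CX12, CX02])]),
  (166, [(222, [CZ02, Z2]), (174, [CX02, K01, CX01, Z2]), (182, [CX02, CX10]), (165, [S01, CX12, CX02])]),
  (167, [(123, []), (242, [CX21, CX02, CZ12, K12, CX21]), (104, [K01, CX02, K01, S01, X1]), (157, [S12, K01, S02, CZ02, CZ01])]),
  (168, [(230, [K01, CX12, K01, X1]), (182, [CX21, CX12, CX02, K01, X1, CX12]), (247, [K01, CZ12, CX12, K01, CZ01, CX21]), (158, [S12, K01, S02, CZ02, CZ01])]),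
  (169, [(131, []), (164, [K12, CX12, CX02, K01, X0]), (67, [CX12, CZ02, CX20, K12, CZ02, X0]), (170, [K01, CX10, CX02, K01, CX12, CX10, X0, CX01])]),
  (170, [(261, [CX21, CX01]), (130, []), (137, [CZ01, CX02, K01, X0]), (169, [K01, CX10, CX02, K01, CX12, CX10, X0, CX01])]),
  (171, [(260, [CX02, K01, CZ01, K01, CX21, CX20, X0, CX02]), (129, []), (239, [CX20, K12, CX12, CX01, CX20]), (171, [K01, CX10, CX02, K01, CX12, CX10, X0, CX01])]),
  (172, [(141, []), (243, [CZ01, K01, CX10, CX21, CX02]), (80, [K01, CX02, K01, CZ02, X0]), (188, [K12, S12])]),
  (173, [(263, [CX02, CZ12, CX10, CX02]), (119, [K01, CX20, CX10, CX02]), (142, []), (187, [K12, S12])]),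
  (174, [(262, [K12, K01, CX02, CZ12, CX20, CX10, CX02]), (166, [K01, CX10, Z2, CX02]), (245, [CZ02, Z2, CX12, CX10]), (189, [K12, S12])]),
  (175, [(143, []), (139, [CX20, CX12, K01, S01, CZ01, CX20]), (127, [K01, CZ12, CX12, K01, S01, CZ01, CX20]), (185, [CZ12, K12, S12, CX02, CX10, CX01, X0])]),
  (176, [(264, []), (189, [X0, CX01, CX12, K01, S02, CX21, CX02]), (148, [K01, CX12, K01, CX02, CX10, CX01, X0]), (184, [CZ12, K12, S12, CX02, CX10, CX01, X0])]),
  (177, [(265, []), (188, [X0, CX01, CX12, K01, S02, CX21, CX02]), (246, [S01]), (186, [CZ12, K12, S12, CX02, CX10, CX01, X0])]),
  (178, [(145, []), (241, [CZ12, CX10, K12, S02, CZ02, X1, CX12]), (134, [K01, CX02, K01, X0]), (179, [CZ12, CZ02, CZ01, Z2])]),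
  (179, [(259, [CX10, K12, CZ02, CX02, CX10, CX21, CX01]), (158, [CZ01, CX10, K12, S02, CZ02, CX12, X0]), (157, [K12, K01, S02, CZ02, Z2]), (178, [CZ12, CZ02, CZ01, Z2])]),
  (180, [(254, [CX10, K12, CZ02, CX02, CX10, CX21, CX01]), (107, [CX10, K12, CZ02, CX20, CX12, CX02]), (241, [K12, K01, CZ02, Z2]), (180, [CZ12, CZ02, CZ01, Z2])]),
  (181, [(147, []), (248, [CX12, K01, CZ12, CX02, CX01]), (119, [CX10, CX02]), (182, [CX02, CX01])]),
  (182, [(267, [CZ12, Z2]), (168, [CX12, K01, S12, CX01, Z2, CX12]), (166, [CX10, CX02]), (181, [CX02, CX01])]),
  (183, [(266, [CZ02, CZ01]), (125, [CX12, K01, CX02, CX21]), (243, [CX02, CX10, CZ02, CX21, CX12]), (183, [CX02, CX01])]),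
  (184, [(150, []), (240, [CX02, CZ12, K12, S12, CX12, CX20]), (110, [S01]), (176, [S12, K01, CZ01, S02, CZ02, CZ01, Z2])]),
  (185, [(255, [K12, CZ02, CX02, CX21, CX20]), (110, [K12, CZ02, CX01, CX12, CX20, CX01]), (163, [S01]), (175, [S12, K01, CZ01, S02, CZ02, CZ01, Z2])]),
  (186, [(257, [K12, CZ02, CX02, CX21, CX20]), (157, [K12, S12, CZ01, X1, CX12, CX20]), (252, [S12, K01, CZ01, S02, Z2]), (177, [S12, K01, CZ01, S02, CZ02, CZ01, Z2])]),
  (187, [(153, []), (159, [K01, CX01, CX12, K01, CX20, CX02]), (99, [CX10, CX01, X0]), (173, [K12, S12])]),
  (188, [(269, [S01]), (177, [K12, S02, CZ02, CX12, CX10, CX01, X0]), (156, [CX10, CX01, X0]), (172, [K12, S12])])]"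
lemma chk6: "list_all chk_row RT6 \<and> map fst RT6 = [162..<189]"
  by code_simp

definition RT7 :: "(nat \<times> (nat \<times> g list) list) list" where
  "RT7 = [(189, [(268, [CX02, K01, CX12, CX02, K01, S01, CX02]), (176, [K12, S02, CZ02, CX12, CX10, CX01, X0]), (251, [K01, CX10, CX02, K01, X1, CX12]), (174, [K12, S12])]),
  (190, [(239, [K12, CX12, K01, CX12, CX10]), (209, [K01, CZ01]), (191, [K01, CX02, K01, CX10]), (192, [K12, S12])]),
  (191, [(238, [K12, CX12, CX02, K01, CX12]), (208, [K01, CZ01]), (190, [K01, CX02, K01, CX10]), (193, [K12, S12])]),
  (192, [(137, [CZ02, CZ01]), (203, [K01, CZ12]), (195, [K01, CX02, K01, CX12]), (190, [K12, S12])]),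
  (193, [(66, []), (197, [K01, CZ02]), (261, [K12, S02, CZ02, CX12, CX02, X2]), (191, [K12, S12])]),
  (194, [(136, [K12, CX12, K01]), (196, [K01, CZ02]), (260, [K12, S02, CZ02, CX12, CX02, X2]), (195, [K12, S12])]),
  (195, [(68, []), (202, [K01, CZ12]), (192, [K01, CX02, K01, CX12]), (194, [K12, S12])]),
  (196, [(245, [CX02, CZ12, CX10, CX02]), (194, [K01, CX20]), (197, [K01, CX02, K01, CX12, CX10, X0]), (210, [K12, S12])]),
  (197, [(244, [CZ01, K01, CX21, CX02, K01, X0]), (193, [K01, CX20]), (196, [K01, CX02, K01, CX12, CX10, X0]), (211, [K12, S12])]),
  (198, [(142, [CZ02, Z2]), (212, [K01, CZ01, CX20]), (201, [K01, CX02, K01, X0]), (208, [K12, S12])]),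
  (199, [(78, []), (200, [K01, CZ02, CX20]), (263, [K12, K01, S02, CZ02, Z2]), (209, [K12, S12])]),
  (200, [(144, [CZ12, CZ01]), (199, [K01, CZ02, CX20]), (262, [K12, K01, S02, CZ02, Z2]), (213, [K12, S12])]),
  (201, [(81, []), (211, [K01, CZ01, CX20]), (198, [K01, CX02, K01, X0]), (212, [K12, S12])]),
  (202, [(246, [CZ01, K01, CX20, CX12, K01, X1]), (195, [K01, CX21]), (233, [S01, CX02, CX01]), (204, [K12, S12])]),
  (203, [(247, [CZ02, CZ01, CX02, CX01]), (192, [K01, CX21]), (232, [S01, CX02, CX01]), (205, [K12, S12])]),
  (204, [(148, [CZ02, CZ01]), (207, [K01, CZ12, CX21]), (231, []), (202, [K12, S12])]),
  (205, [(88, []), (213, [K01, CZ01, CX21]), (255, [K12, S02, CZ02, CX21]), (203, [K12, S12])]),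
  (206, [(149, [CZ12, Z2]), (210, [K01, CZ01, CX21]), (254, [K12, S02, CZ02, CX21]), (207, [K12, S12])]),
  (207, [(91, []), (204, [K01, CZ12, CX21]), (228, []), (206, [K12, S12])]),
  (208, [(251, [K01, CX12, K01, CX02, CX10, X0]), (191, [CZ01, K01]), (209, [K01, CX02, K01, CX12, CX10, X0]), (198, [K12, S12])]),
  (209, [(250, [CX12, K01, CX12, CX02, K01, CX02]), (190, [CZ01, K01]), (208, [K01, CX02, K01, CX12, CX10, X0]), (199, [K12, S12])]),
  (210, [(156, [K01, CX02, K01, CX12]), (206, [CX21, CZ01, K01]), (213, [K01, CX02, K01, CX12]), (196, [K12, S12])]),
  (211, [(97, []), (201, [CX20, CZ01, K01]), (269, [S01, CX01, X1]), (197, [K12, S12])]),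
  (212, [(155, [K01, CX12, K01, CX02]), (198, [CX20, CZ01, K01]), (268, [S01, CX01, X1]), (201, [K12, S12])]),
  (213, [(100, []), (205, [CX21, CZ01, K01]), (210, [K01, CX02, K01, CX12]), (200, [K12, S12])]),
  (214, [(241, [S02, CZ02, Z2]), (259, []), (227, [CX02, CX10, CX01]), (228, [K12, S12, CX02, CX10, CX01])]),
  (215, [(240, [CZ01, S02, CZ02, CZ01, Z2]), (257, []), (226, [CX02, CX10, CX01]), (229, [K12, S12, CX02, CX10, CX01])])]"
lemma chk7: "list_all chk_row RT7 \<and> map fst RT7 = [189..<216]"
  by code_simp

definition RT8 :: "(nat \<times> (nat \<times> g list) list) list" where
  "RT8 = [(216, [(157, [CZ02, Z2]), (256, [S02, CX21, CX01]), (237, []), (226, [K12, S12, CX02, CX10, CX01])]),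
  (217, [(108, []), (264, [CZ01, K01, CZ02, CX20, CX01, CX12]), (256, [K12, S12, CZ01, CX20, CX10, CX02]), (227, [K12, S12, CX02, CX10, CX01])]),
  (218, [(158, [CZ12, CZ02, CZ01, Z2]), (258, [CX21, CX01]), (265, [K01, CZ02, CX02, K01, CZ01, CX20]), (231, [K12, S12, CX02, CX10, CX01])]),
  (219, [(111, []), (265, [CZ01, K01, CZ02, CX02, CX10, CX21]), (234, []), (230, [K12, S12, CX02, CX10, CX01])]),
  (220, [(243, [CZ01, S02, CZ01, CX21, CX01]), (230, [K12, CX01, CX12]), (221, [CZ12, CZ02, CZ01, Z0]), (222, [S01, CX12, CX02])]),
  (221, [(242, [S02, CZ02, CX21, CX01, Z2]), (229, [K12, CX01, CX12]), (220, [CZ12, CZ02, CZ01, Z0]), (223, [S01, CX12, CX02])]),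
  (222, [(166, [CZ02, Z2]), (227, [K12, S02, CX21, CX10]), (225, [CZ02, Z2]), (220, [S01, CX12, CX02])]),
  (223, [(116, []), (263, [CX20, K12, CX01]), (267, [CX02, CX10]), (221, [S01, CX12, CX02])]),
  (224, [(140, [S02, CX21, CX01]), (262, [CX20, K12, CX01]), (266, [CX02, CX10]), (225, [S01, CX12, CX02])]),
  (225, [(120, []), (226, [K12, S02, CX21, CX10]), (222, [CZ02, Z2]), (224, [S01, CX12, CX02])]),
  (226, [(249, [K01, CX12, K01, X1]), (225, [K01, S02, CX21, CZ01]), (215, [S01, CX02, CX01]), (216, [S12, K01, S02, CZ02, CZ01])]),
  (227, [(248, [CZ12, Z2]), (222, [K01, S02, CX21, CZ01]), (214, [S01, CX02, CX01]), (217, [S12, K01, S02, CZ02, CZ01])]),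
  (228, [(152, []), (267, [CX21, CX02, K01, CX21, CX12]), (207, []), (214, [S12, K01, S02, CZ02, CZ01])]),
  (229, [(126, []), (221, [K12, CX21, CZ01]), (259, [K12, S02, CZ02, CX21]), (215, [S12, K01, S02, CZ02, CZ01])]),
  (230, [(168, [K01, CX12, K01, X1]), (220, [K12, CX21, CZ01]), (257, [K12, S02, CZ02, CX21]), (219, [S12, K01, S02, CZ02, CZ01])]),
  (231, [(128, []), (266, [CX21, CX02, K01, CX21, CX12]), (204, []), (218, [S12, K01, S02, CZ02, CZ01])]),
  (232, [(252, [K12, K01, S02, CZ02, Z2]), (261, [K01, CZ01, CX12, K01, S02, X2, X0]), (203, [CX02, CX10, CX01]), (234, [K12, K01, CX02, CZ12, CX20, CX10, CX02])]),
  (233, [(253, [CZ12, CZ02, CZ01, Z2]), (260, [K01, CZ01, CX12, K01, S02, X2, X0]), (202, [CX02, CX10, CX01]), (235, [K12, K01, CX02, CZ12, CX20, CX10, CX02])]),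
  (234, [(163, []), (237, [K01, CZ02, CX01, CX20, CX10]), (219, []), (232, [K12, K01, CX02, CZ12, CX20, CX10, CX02])]),
  (235, [(133, []), (236, [K12, CZ02, CX21, CX12, X0, CX02]), (264, [K01, CZ02, CX02, K01, CZ01, CX20]), (233, [K12, K01, CX02, CZ12, CX20, CX10, CX02])]),
  (236, [(162, [K01, CX02, K01, X0]), (235, [K12, CZ02, CX21, CX12, X0, CX02]), (258, [K12, S12, CZ01, CX20, CX10, CX02]), (237, [K12, K01, CX02, CZ12, CX20, CX10, CX02])]),
  (237, [(135, []), (234, [K01, CZ02, CX01, CX20, CX10]), (216, []), (236, [K12, K01, CX02, CZ12, CX20, CX10, CX02])]),
  (238, [(191, [K12, K01, CZ12, CZ02, CX21]), (151, [K12, CX12, CZ12, CX21]), (136, []), (239, [CX12])]),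
  (239, [(190, [K12, K01, CZ12, CZ01, CX21]), (146, [CX20, K12, CZ12, CZ02, CZ01, Z2]), (171, [CX20, K12, CZ01, CX21, CX20]), (238, [CX12])]),
  (240, [(215, [CZ01, S02, CZ02, CZ01, Z0]), (184, [CX20, K12, S12, CX12, CZ12, CX02]), (162, [CX20, K12, CX02, K01, CZ12, CX02]), (249, [K12, CX02, CX10, CX01])]),
  (241, [(214, [S02, CZ02, Z0]), (178, [CX12, K01, CX02, CZ12, CX20, CX10, Z1]), (180, [K12, CX02, K01, X2]), (248, [CZ12, K12, CX02, CX10, CZ02, CX01, X2])]),
  (242, [(221, [S02, CZ02, CX21, CX01, Z0]), (167, [K12, CX12, CZ12, CX02, CX21]), (140, []), (243, [S01, CX12, CX02])])]"
lemma chk8: "list_all chk_row RT8 \<and> map fst RT8 = [216..<243]"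
  by code_simp

definition RT9 :: "(nat \<times> (nat \<times> g list) list) list" where
  "RT9 = [(243, [(220, [CX02, CX21, CZ12, CX20, CX02]), (172, [CX02, K01, CZ12, CX01, CZ01]), (183, [CX12, CZ02, CX21, CX10, CX02]), (242, [S01, CX12, CX02])]),
  (244, [(197, [K01, CZ02, CX02, K01, CZ01, CX20]), (251, [CX12, K01, S02, CX21, Z2, CX02]), (144, []), (251, [K12, S12])]),
  (245, [(196, [CX02, CZ12, CX10, CX02]), (245, [CX20, CZ01, CX12, K01, CZ01, CX12, CX20]), (174, [CX12, CX10, CZ02, Z2]), (250, [K12, S12])]),
  (246, [(202, [K01, CZ12, CX12, K01, CZ01, CX21]), (250, [CX02, K01, S12, CX12]), (177, [S01]), (247, [CZ12, K12, S12, X1])]),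
  (247, [(203, [CZ02, CZ01, CX02, CX01]), (247, [CX01, CZ12, CX20, K12, CZ12, CX20, CX01]), (168, [CZ01, K01, CX20, CX12, K01, X1]), (246, [K12, S12, CZ12, Z2])]),
  (248, [(227, [CZ12, Z2]), (181, [CX02, K01, CX10, CX21, CX12]), (149, []), (241, [CX02, CZ02, S01, K12, CZ12, CZ01, CX21])]),
  (249, [(226, [K01, CX12, K01, X1]), (165, [K12, CX02, X2, CX21, CZ01]), (161, [CX02, CX10, K12, S02, CX21]), (240, [S01, K12, CZ02, CZ01])]),
  (250, [(209, [CX12, K01, CX12, CX02, K01, CX02]), (246, [S12, K01, CZ12, CX02]), (155, []), (245, [K12, S12])]),
  (251, [(208, [K01, CX01, CX12, K01, X0, CX02]), (244, [K12, S02, CZ02, CX12, CX10, X0]), (189, [K01, CX02, K01, CX12, CX01, X1]), (244, [K12, S12])]),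
  (252, [(232, [K01, CX02, K01, CZ02, X0]), (252, [CZ01, Z2, CX12, K01, CZ01, CX12, Z1]), (186, [CZ12, K12, S12, S01, X0]), (253, [K12, K01, CX02, CZ02, CX20, CX10, CX02])]),
  (253, [(233, [CZ12, CZ02, CZ01, Z2]), (253, [K01, CZ01, K01, CX01, Z2, Z0]), (158, []), (252, [K01, CX02, K01, CX12, CX10, CZ02, X0])]),
  (254, [(180, [CX20, CX12, K01, S12, CX10, CX02, CX01]), (269, [K01, CZ01, K01, S02, CX02, CX10]), (206, [K01, S02, CZ01, CX02]), (256, [S01, CX12, CX02])]),
  (255, [(185, [CX20, K12, CX12, CZ02, CX02]), (268, [K01, CZ01, K01, S02, CX02, CX10]), (205, [K01, S02, CZ01, CX02]), (257, [S01, CX12, CX02])]),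
  (256, [(160, []), (216, [S02, CX21, CX01]), (217, [CX20, CX12, K01, S12, S01, CX02]), (254, [S01, CX12, CX02])]),
  (257, [(186, [CX20, K12, CX12, CZ02, CX02]), (215, []), (230, [K01, S02, CZ01, CX02]), (255, [S01, CX12, CX02])]),
  (258, [(161, []), (218, [CX21, CX01]), (236, [CX20, CX12, K01, S12, S01, CX02]), (259, [S01, CX12, CX02])]),
  (259, [(179, [CX20, CX12, K01, S12, CX10, CX02, CX01]), (214, []), (229, [K01, S02, CZ01, CX02]), (258, [S01, CX12, CX02])]),
  (260, [(171, [CX02, K01, CZ01, K01, CX21, CX20, X0, CX02]), (233, [K01, CZ01, CX12, K01, S02, X2, X0]), (194, [CX12, CZ02, CX20, K12, CZ02, X0]), (261, [CZ01, CX12, K01, CZ01, S02, X1, CX10])]),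
  (261, [(170, [CX21, CX01]), (232, [K01, CZ01, CX12, K01, S02, X2, X0]), (193, [CX12, CZ02, CX20, K12, CZ02, X0]), (260, [CZ12, CX10, K12, S02, CZ01, CX12, X0])]),
  (262, [(174, [K12, K01, CX02, CZ12, CX20, CX10, CX02]), (224, [K12, CZ01, CX20]), (200, [K01, CX02, K01, CZ02, X0]), (269, [S12, K01, S02])]),
  (263, [(173, [CX02, CZ12, CX10, CX02]), (223, [K12, CZ01, CX20]), (199, [K01, CX02, K01, CZ02, X0]), (268, [K12, S12, CX02, CZ12, CX10, CX02])]),
  (264, [(176, []), (217, [CX12, K01, CZ02, CX10, CZ01, CX20]), (235, [CZ01, K01, CX21, CX02, K01, X0]), (265, [CZ02, Z2])]),
  (265, [(177, []), (219, [CX21, CX10, CX02, K01, CX20, CZ01]), (218, [CZ01, K01, CX21, CX02, K01, X0]), (264, [CZ02, Z2])]),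
  (266, [(183, [CZ02, CZ01]), (231, [CX12, K01, CZ12, CX02, CX21]), (224, [CX10, CX02]), (267, [CZ12, Z2, CX02, CX01])]),
  (267, [(182, [CZ12, Z2]), (228, [CX12, K01, CZ12, CX02, CX21]), (223, [CX10, CX02]), (266, [CX02, CX01, CZ12, Z2])]),
  (268, [(189, [CX02, K01, CX12, CX02, K01, S01, CX02]), (255, [K01, CX01, CX12, K01, CX20, CX02]), (212, [CX10, CX01, X0]), (263, [CX12, CZ12, CX10, K12, S12, CX02])]),
  (269, [(188, [S01]), (254, [K01, CX01, CX12, K01, CX20, CX02]), (211, [CX10, CX01, X0]), (262, [K12, S12, S01])])]"
lemma chk9: "list_all chk_row RT9 \<and> map fst RT9 = [243..<270]"
  by code_simp

definition RT :: "(nat \<times> (nat \<times> g list) list) list" where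
  "RT = RT0 @ RT1 @ RT2 @ RT3 @ RT4 @ RT5 @ RT6 @ RT7 @ RT8 @ RT9"

lemma upts: "[0..<27] @ [27..<54] @ [54..<81] @ [81..<108] @ [108..<135] @ [135..<162] @ [162..<189] @ [189..<216] @ [216..<243] @ [243..<270] = [0..<270]"
  by code_simp

lemma chk_all: "list_all chk_row RT \<and> map fst RT = [0..<270]"
  using chk0 chk1 chk2 chk3 chk4 chk5 chk6 chk7 chk8 chk9 upts
  unfolding RT_def by simp

definition WS :: "(g \<times> g list) list" where
  "WS = [(CX02, [S12, CX01, S12]),
  (CX10, [K01, CX01, K01]),
  (K12, [S12, K01, S12, K01]),
  (CX20, [S12, K01, CX01, K01, S12]),
  (S01, [CX01, K01, CX01, K01, CX01]),
  (CZ02, [K01, S12, K01, CX01, K01, S12, K01]),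
  (S02, [S12, CX01, K01, CX01, K01, CX01, S12]),
  (CZ01, [S12, K01, S12, K01, CX01, S12, K01, S12, K01]),
  (CX12, [CX01, K01, CX01, K01, S12, CX01, S12, K01, CX01, K01, CX01]),
  (CZ12, [CX01, K01, CX01, S12, K01, CX01, K01, S12, CX01, K01, CX01]),
  (CX21, [S12, K01, CX01, K01, S12, CX01, S12, K01, CX01, K01, S12, CX01]),
  (X1, [S12, K01, S12, CX01, S12, K01, S12, CX01, S12, K01, S12, CX01, S12, K01, S12, CX01]),
  (X2, [S12, CX01, S12, K01, S12, CX01, S12, K01, S12, CX01, S12, K01, S12, CX01, S12, K01]),
  (Z1, [S12, K01, S12, K01, CX01, S12, K01, S12, CX01, S12, K01, S12, CX01, S12, K01, S12, CX01, K01]),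
  (Z2, [S12, K01, CX01, S12, K01, S12, CX01, S12, K01, S12, CX01, S12, K01, S12, CX01, K01, S12, K01]),
  (X0, [S12, K01, S12, CX01, S12, K01, S12, K01, CX01, S12, K01, S12, K01, CX01, S12, K01, S12, K01, CX01, K01]),
  (Z0, [S12, CX01, S12, K01, S12, K01, CX01, S12, K01, S12, K01, CX01, S12, K01, S12, K01, CX01, K01, S12, K01]),
  (CCX02, [S12, CCX01, S12]),
  (CCX12, [S12, CX01, K01, CX01, K01, CX01, S12, CCX01, S12, CX01, K01, CX01, K01, CX01, S12])]"

lemma WS_ok: "list_all (\<lambda>(c, w). list_all (\<lambda>x. x \<in> set Slist) w \<and> eqw [c] w) WS"
  by code_simp

lemma WS_cover: "c \<in> set Slist \<or> c \<in> fst ` set WS"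
  by (cases c) (simp_all add: Slist_def WS_def)

lemma Reps_ok: "length Reps = 270 \<and> Reps ! 0 = [] \<and> list_all (\<lambda>w. length (filter (\<lambda>c. \<not> nonT c) w) \<le> 120) Reps"
  by code_simp

definition U :: "real mat set" where
  "U = {M. \<exists>i h. i < 270 \<and> list_all nonT h \<and> M = word_sem (map gs (rep i @ h))}"

lemma row_exists: "i < 270 \<Longrightarrow> \<exists>L. (i, L) \<in> set RT \<and> chk_row (i, L)"
proof -
  assume i: "i < 270"
  have "i \<in> set (map fst RT)" using chk_all i by simp
  then obtain L where L: "(i, L) \<in> set RT" by auto
  moreover have "chk_row (i, L)" using chk_all L by (simp add: list_all_iff)
  ultimately show ?thesis by blast
qed

lemma closeS: assumes s: "s \<in> set Slist" and M: "M \<in> U" shows "gate_sem (gs s) * M \<in> U"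
proof -
  from M obtain i h where i: "i < 270" and h: "list_all nonT h" and Mi: "M = word_sem (map gs (rep i @ h))"
    unfolding U_def by blast
  from row_exists[OF i] obtain L where c: "chk_row (i, L)" by blast
  hence la: "list_all2 (\<lambda>s p. case p of (j, h) \<Rightarrow> j < 270 \<and> list_all nonT h \<and> eqw (s # rep i) (rep j @ h)) Slist L"
    by (simp add: chk_row_def)
  from s obtain k where k: "k < length Slist" and sk: "s = Slist ! k" by (auto simp: in_set_conv_nth)
  obtain j h' where p: "L ! k = (j, h')" by (cases "L ! k")
  from la k have "case L ! k of (j, h) \<Rightarrow> j < 270 \<and> list_all nonT h \<and> eqw (Slist ! k # rep i) (rep j @ h)"
    by (simp add: list_all2_conv_all_nth)
  hence j: "j < 270" and h': "list_all nonT h'" and e: "eqw (s # rep i) (rep j @ h')"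
    using p sk by auto
  have "gate_sem (gs s) * M = word_sem (map gs (s # rep i)) * word_sem (map gs h)"
    unfolding Mi word_sem_append
    by (simp add: word_sem_Cons assoc_mult_mat[OF gate_carrier word_carrier word_carrier])
  also have "\<dots> = word_sem (map gs (rep j @ h')) * word_sem (map gs h)"
    using eqw_sound[OF e] by simp
  also have "\<dots> = word_sem (map gs (rep j @ (h' @ h)))"
    by (simp only: word_sem_append assoc_mult_mat[OF word_carrier word_carrier word_carrier] append_assoc[symmetric])
  finally have eq: "gate_sem (gs s) * M = word_sem (map gs (rep j @ (h' @ h)))" .
  have "list_all nonT (h' @ h)" using h h' by simp
  thus ?thesis unfolding U_def using j eq by blast
qed

lemma U_carrier: "M \<in> U \<Longrightarrow> M \<in> carrier_mat 8 8"
proof -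
  assume "M \<in> U"
  then obtain i h where "M = word_sem (map gs (rep i @ h))" unfolding U_def by blast
  thus ?thesis using word_carrier[of "rep i @ h"] by simp
qed

lemma closeW: "set ws \<subseteq> set Slist \<Longrightarrow> M \<in> U \<Longrightarrow> word_sem (map gs ws) * M \<in> U"
proof (induction ws)
  case Nil
  have "M \<in> carrier_mat 8 8" using Nil.prems(2) by (rule U_carrier)
  then show ?case using Nil.prems by (simp add: word_sem_Nil)
next
  case (Cons c ws)
  have MU: "M \<in> carrier_mat 8 8" using Cons.prems(2) by (rule U_carrier)
  have "word_sem (map gs (c # ws)) * M = gate_sem (gs c) * (word_sem (map gs ws) * M)"
    by (simp add: word_sem_Cons assoc_mult_mat[OF gate_carrier word_carrier MU])
  moreover have "word_sem (map gs ws) * M \<in> U" using Cons by simp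
  ultimately show ?case using closeS Cons.prems by simp
qed

lemma closeAll: assumes M: "M \<in> U" shows "gate_sem (gs c) * M \<in> U"
proof (cases "c \<in> set Slist")
  case True
  then show ?thesis using closeS M by blast
next
  case False
  then obtain w where cw: "(c, w) \<in> set WS" using WS_cover[of c] by auto
  hence ok: "set w \<subseteq> set Slist" and e: "eqw [c] w" using WS_ok by (auto simp: list_all_iff)
  have "gate_sem (gs c) = word_sem (map gs [c])"
    using gate_carrier[of c] by (simp add: word_sem_Cons word_sem_Nil)
  also have "\<dots> = word_sem (map gs w)" using eqw_sound[OF e] .
  finally show ?thesis using closeW[OF ok M] by simp
qed

lemma all_in_U: "word_sem (map gs C0) \<in> U"
proof (induction C0)
  case Nil
  have "word_sem (map gs (rep 0 @ [])) = word_sem (map gs [])"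
    using Reps_ok by (simp add: rep_def)
  then show ?case unfolding U_def by (intro CollectI exI[of _ 0] exI[of _ "[]"]) simp
next
  case (Cons c C0)
  then show ?case using closeAll by (simp add: word_sem_Cons)
qed

lemma gs_in: "gs c \<in> Sigma_D"
  by (cases c) (simp_all add: Sigma_D_def)

lemma gs_inv: "Xg 0 = gs X0" "Xg 1 = gs X1" "Xg 2 = gs X2" "Zg 0 = gs Z0" "Zg 1 = gs Z1" "Zg 2 = gs Z2"
  "CXg 0 1 = gs CX01" "CXg 0 2 = gs CX02" "CXg 1 0 = gs CX10" "CXg 1 2 = gs CX12" "CXg 2 0 = gs CX20" "CXg 2 1 = gs CX21"
  "CCXg 0 1 = gs CCX01" "CCXg 0 2 = gs CCX02" "CCXg 1 2 = gs CCX12"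
  "CZg 0 1 = gs CZ01" "CZg 0 2 = gs CZ02" "CZg 1 2 = gs CZ12"
  "Kg 0 1 = gs K01" "Kg 1 2 = gs K12" "Sg 0 1 = gs S01" "Sg 0 2 = gs S02" "Sg 1 2 = gs S12"
  by simp_all

lemma Sigma_gs: "x \<in> Sigma_D \<Longrightarrow> \<exists>c. x = gs c"
  unfolding Sigma_D_def
  by (elim insertE emptyE; simp only: gs_inv; blast)

lemma tof_gs: "is_toffoli (gs c) = (\<not> nonT c)"
  by (cases c) simp_all

theorem corollary1:
  assumes "set C \<subseteq> Sigma_D"
  shows "\<exists>C'. set C' \<subseteq> Sigma_D \<and> toffoli_count C' \<le> 120 \<and> word_sem C = word_sem C'"
proof -
  have "\<forall>y\<in>set C. \<exists>x. y = gs x" using assms Sigma_gs by blast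
  then obtain C0 where C0: "C = map gs C0" using ex_map_conv by metis
  have "word_sem (map gs C0) \<in> U" by (rule all_in_U)
  then obtain i h where i: "i < 270" and h: "list_all nonT h" and e: "word_sem C = word_sem (map gs (rep i @ h))"
    unfolding U_def C0 by blast
  have ri: "rep i \<in> set Reps" using i Reps_ok by (simp add: rep_def)
  hence t: "length (filter (\<lambda>c. \<not> nonT c) (rep i)) \<le> 120" using Reps_ok by (auto simp: list_all_iff)
  have fh: "filter (\<lambda>c. \<not> nonT c) h = []" using h by (simp add: list_all_iff filter_empty_conv)
  have "toffoli_count (map gs (rep i @ h)) = length (filter (\<lambda>c. \<not> nonT c) (rep i @ h))"
    unfolding toffoli_count_def by (simp add: filter_map comp_def tof_gs)
  also have "\<dots> \<le> 120" using t fh by simp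
  finally have tc: "toffoli_count (map gs (rep i @ h)) \<le> 120" .
  have "set (map gs (rep i @ h)) \<subseteq> Sigma_D" using gs_in by auto
  with tc e show ?thesis by blast
qed

end
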